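(* Let $p$ be even and let $\mathcal{C}_0$ be a two-sided $p$-periodic CMV matrix with discriminant $\Delta_{\mathcal{C}_0}$ and isospectral torus $\mathcal{T}_{\mathcal{C}_0}$. Given a two-sided (not a priori periodic) CMV matrix $\mathcal{C}$, we have $\Delta_{\mathcal{C}_0}(\mathcal{C})=S^p+S^{-p}$ if and only if $\mathcal{C}\in\mathcal{T}_{\mathcal{C}_0}$, where $S$ is the right shift on $\ell^2(\mathbb{Z})$.
   Context: For $\alpha\in\mathbb{D}=\{|z|<1\}$ let $\rho=(1-|\alpha|^2)^{1/2}$ and $\Theta(\alpha)=\begin{pmatrix}\bar\alpha&\rho\\ \rho&-\alpha\end{pmatrix}$. Given $\{\alpha_n\}_{n\in\mathbb{Z}}\subset\mathbb{D}$, the two-sided CMV matrix is $\mathcal{C}=\mathcal{L}\mathcal{M}$ on $\ell^2(\mathbb{Z})$, where $\mathcal{L}=\bigoplus_j\Theta(\alpha_{2j})$ with $\Theta(\alpha_{2j})$ acting on the coordinates $(2j,2j+1)$, and $\mathcal{M}=\bigoplus_j\Theta(\alpha_{2j-1})$ with $\Theta(\alpha_{2j-1})$ acting on the coordinates $(2j-1,2j)$; $\mathcal{C}$ is unitary. It is $p$-periodic if $\alpha_{n+p}=\alpha_n$. For periodic $\mathcal{C}_0$ with coefficients $\alpha^{(0)}_n$, define $M_n(z)=(\rho^{(0)}_n)^{-1}\begin{pmatrix}z&-\bar\alpha^{(0)}_n\\-\alpha^{(0)}_nz&1\end{pmatrix}$ and the discriminant $\Delta_{\mathcal{C}_0}(z)=\mathrm{Tr}\bigl(z^{-p/2}M_{p-1}(z)\cdots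 M_0(z)\bigr)$, a Laurent polynomial real on the unit circle; $\Delta_{\mathcal{C}_0}(\mathcal{C})$ is this Laurent polynomial applied to the unitary $\mathcal{C}$ (using $\mathcal{C}^{-1}=\mathcal{C}^*$). The isospectral torus $\mathcal{T}_{\mathcal{C}_0}$ is the set of two-sided $p$-periodic CMV matrices with the same discriminant as $\mathcal{C}_0$. $(Su)_n=u_{n-1}$. *)

theory Defs
  imports Complex_Main "HOL-Computational_Algebra.Polynomial"
begin

text \<open>All matrices occurring here are banded, so products are finite sums over
  the finitely many indices where both factors are nonzero.\<close>

type_synonym zmat = "int \<Rightarrow> int \<Rightarrow> complex"

definition zmat_mult :: "zmat \<Rightarrow> zmat \<Rightarrow> zmat" where
  "zmat_mult A B = (\<lambda>i j. \<Sum>k\<in>{k. A i k \<noteq> 0 \<and> B k j \<noteq> 0}. A i k * B k j)"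

definition zmat_id :: zmat where
  "zmat_id = (\<lambda>i j. if i = j then 1 else 0)"

definition zmat_adj :: "zmat \<Rightarrow> zmat" where
  "zmat_adj A = (\<lambda>i j. cnj (A j i))"

fun zmat_pow :: "zmat \<Rightarrow> nat \<Rightarrow> zmat" where
  "zmat_pow A 0 = zmat_id"
| "zmat_pow A (Suc n) = zmat_mult A (zmat_pow A n)"

text \<open>Integer powers of a unitary operator, using U^{-1} = U^*.\<close>
definition zmat_zpow :: "zmat \<Rightarrow> int \<Rightarrow> zmat" where
  "zmat_zpow U k = (if 0 \<le> k then zmat_pow U (nat k) else zmat_pow (zmat_adj U) (nat (- k)))"

text \<open>Right shift: (S u)_n = u_{n-1}, i.e. S has entries S(i,j) = 1 iff i = j + 1.\<close>
definition shiftR :: zmat where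
  "shiftR = (\<lambda>i j. if i = j + 1 then 1 else 0)"

definition rho :: "complex \<Rightarrow> complex" where
  "rho a = complex_of_real (sqrt (1 - (cmod a)\<^sup>2))"

text \<open>Block-diagonal direct sum of Theta(alpha_m) acting on coordinates (m, m+1),
  for all m with m mod 2 = e.\<close>
definition theta_blocks :: "int \<Rightarrow> (int \<Rightarrow> complex) \<Rightarrow> zmat" where
  "theta_blocks e \<alpha> = (\<lambda>i j.
     let m = (if (i - e) mod 2 = 0 then i else i - 1) in
     if i = m \<and> j = m then cnj (\<alpha> m)
     else if i = m \<and> j = m + 1 then rho (\<alpha> m)
     else if i = m + 1 \<and> j = m then rho (\<alpha> m)
     else if i = m + 1 \<and> j = m + 1 then - \<alpha> m
     else 0)"

definition cmvL :: "(int \<Rightarrow> complex) \<Rightarrow> zmat" where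
  "cmvL \<alpha> = theta_blocks 0 \<alpha>"

definition cmvM :: "(int \<Rightarrow> complex) \<Rightarrow> zmat" where
  "cmvM \<alpha> = theta_blocks 1 \<alpha>"

definition cmv :: "(int \<Rightarrow> complex) \<Rightarrow> zmat" where
  "cmv \<alpha> = zmat_mult (cmvL \<alpha>) (cmvM \<alpha>)"

definition in_disk_seq :: "(int \<Rightarrow> complex) \<Rightarrow> bool" where
  "in_disk_seq \<alpha> \<longleftrightarrow> (\<forall>n. cmod (\<alpha> n) < 1)"

definition periodic_seq :: "(int \<Rightarrow> complex) \<Rightarrow> nat \<Rightarrow> bool" where
  "periodic_seq \<alpha> p \<longleftrightarrow> (\<forall>n. \<alpha> (n + int p) = \<alpha> n)"

text \<open>2x2 matrices with polynomial entries, as quadruples (a,b,c,d) = [[a,b],[c,d]].\<close>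
type_synonym pm2 = "complex poly \<times> complex poly \<times> complex poly \<times> complex poly"

definition pm2_mult :: "pm2 \<Rightarrow> pm2 \<Rightarrow> pm2" where
  "pm2_mult X Y = (case X of (a,b,c,d) \<Rightarrow> case Y of (e,f,g,h) \<Rightarrow>
     (a*e + b*g, a*f + b*h, c*e + d*g, c*f + d*h))"

definition pm2_id :: pm2 where
  "pm2_id = (1, 0, 0, 1)"

definition pm2_trace :: "pm2 \<Rightarrow> complex poly" where
  "pm2_trace X = (case X of (a,b,c,d) \<Rightarrow> a + d)"

definition transfer :: "(int \<Rightarrow> complex) \<Rightarrow> int \<Rightarrow> pm2" where
  "transfer \<alpha> n = (let r = inverse (rho (\<alpha> n)) in
     (smult r [:0, 1:], smult r [: - cnj (\<alpha> n) :],
      smult r [:0, - \<alpha> n:], smult r [:1:]))"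

fun transfer_prod :: "(int \<Rightarrow> complex) \<Rightarrow> nat \<Rightarrow> pm2" where
  "transfer_prod \<alpha> 0 = pm2_id"
| "transfer_prod \<alpha> (Suc n) = pm2_mult (transfer \<alpha> (int n)) (transfer_prod \<alpha> n)"

definition disc_poly :: "(int \<Rightarrow> complex) \<Rightarrow> nat \<Rightarrow> complex poly" where
  "disc_poly \<alpha> p = pm2_trace (transfer_prod \<alpha> p)"

definition discriminant :: "(int \<Rightarrow> complex) \<Rightarrow> nat \<Rightarrow> complex \<Rightarrow> complex" where
  "discriminant \<alpha> p z = z powi (- int (p div 2)) * poly (disc_poly \<alpha> p) z"

text \<open>The Laurent polynomial Delta applied to a unitary U:
  sum_{k=0..p} coeff(T,k) U^{k - p/2}.\<close>
definition disc_apply :: "(int \<Rightarrow> complex) \<Rightarrow> nat \<Rightarrow> zmat \<Rightarrow> zmat" where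
  "disc_apply \<alpha> p U = (\<lambda>i j. \<Sum>k\<le>p. coeff (disc_poly \<alpha> p) k *
      zmat_zpow U (int k - int (p div 2)) i j)"

definition iso_torus :: "(int \<Rightarrow> complex) \<Rightarrow> nat \<Rightarrow> zmat set" where
  "iso_torus \<alpha>0 p = {cmv \<beta> | \<beta>. in_disk_seq \<beta> \<and> periodic_seq \<beta> p \<and>
      (\<forall>z. z \<noteq> 0 \<longrightarrow> discriminant \<beta> p z = discriminant \<alpha>0 p z)}"

end

theory Submission
  imports Defs "Jordan_Normal_Form.Determinant" "HOL-Computational_Algebra.Fundamental_Theorem_Algebra"
begin

definition band :: "int \<Rightarrow> zmat \<Rightarrow> bool" where
  "band r A \<longleftrightarrow> (\<forall>i j. r < \<bar>i - j\<bar> \<longrightarrow> A i j = 0)"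

definition zapp :: "zmat \<Rightarrow> (int \<Rightarrow> complex) \<Rightarrow> (int \<Rightarrow> complex)" where
  "zapp A v = (\<lambda>i. \<Sum>j\<in>{j. A i j \<noteq> 0}. A i j * v j)"

definition delta :: "int \<Rightarrow> int \<Rightarrow> complex" where
  "delta j = (\<lambda>k. if k = j then 1 else 0)"

lemma band_mono: "band r A \<Longrightarrow> r \<le> s \<Longrightarrow> band s A"
  unfolding band_def by auto

lemma band_supp: "band r A \<Longrightarrow> {j. A i j \<noteq> 0} \<subseteq> {i - r..i + r}"
  unfolding band_def by force

lemma zapp_win:
  assumes "band r A" "r \<le> R"
  shows "zapp A v i = (\<Sum>j\<in>{i-R..i+R}. A i j * v j)"
proof -
  have "{j. A i j \<noteq> 0} \<subseteq> {i-R..i+R}" using band_supp[OF assms(1)] assms(2) by force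
  then show ?thesis unfolding zapp_def
    by (intro sum.mono_neutral_left) auto
qed

lemma mult_win:
  assumes "band r A" "r \<le> R"
  shows "zmat_mult A B i j = (\<Sum>k\<in>{i-R..i+R}. A i k * B k j)"
proof -
  have "{k. A i k \<noteq> 0 \<and> B k j \<noteq> 0} \<subseteq> {i-R..i+R}" using band_supp[OF assms(1)] assms(2) by force
  then show ?thesis unfolding zmat_mult_def
    by (intro sum.mono_neutral_left) auto
qed

lemma band_mult:
  assumes "band r A" "band s B"
  shows "band (r + s) (zmat_mult A B)"
  unfolding band_def
proof (intro allI impI)
  fix i j assume h: "r + s < \<bar>i - j\<bar>"
  have "zmat_mult A B i j = (\<Sum>k\<in>{i-r..i+r}. A i k * B k j)" using mult_win[OF assms(1) order_refl] by simp
  also have "\<dots> = 0"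
  proof (intro sum.neutral ballI)
    fix k assume "k \<in> {i-r..i+r}"
    then have "s < \<bar>k - j\<bar>" using h by auto
    then show "A i k * B k j = 0" using assms(2) unfolding band_def by auto
  qed
  finally show "zmat_mult A B i j = 0" .
qed

lemma zapp_mult:
  assumes A: "band r A" and B: "band s B"
  shows "zapp (zmat_mult A B) v = zapp A (zapp B v)"
proof
  fix i
  have AB: "band (r+s) (zmat_mult A B)" using band_mult[OF A B] .
  have "zapp (zmat_mult A B) v i = (\<Sum>j\<in>{i-(r+s)..i+(r+s)}. zmat_mult A B i j * v j)"
    using zapp_win[OF AB order_refl] by simp
  also have "\<dots> = (\<Sum>j\<in>{i-(r+s)..i+(r+s)}. \<Sum>k\<in>{i-r..i+r}. A i k * B k j * v j)"
    using mult_win[OF A order_refl] by (simp add: sum_distrib_right)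
  also have "\<dots> = (\<Sum>k\<in>{i-r..i+r}. \<Sum>j\<in>{i-(r+s)..i+(r+s)}. A i k * B k j * v j)"
    by (rule sum.swap)
  also have "\<dots> = (\<Sum>k\<in>{i-r..i+r}. A i k * zapp B v k)"
  proof (intro sum.cong refl)
    fix k assume k: "k \<in> {i-r..i+r}"
    have "zapp B v k = (\<Sum>j\<in>{k-s..k+s}. B k j * v j)" using zapp_win[OF B order_refl] by simp
    also have "\<dots> = (\<Sum>j\<in>{i-(r+s)..i+(r+s)}. B k j * v j)"
    proof (rule sum.mono_neutral_left)
      show "{k-s..k+s} \<subseteq> {i-(r+s)..i+(r+s)}" using k by auto
      show "\<forall>j\<in>{i-(r+s)..i+(r+s)} - {k-s..k+s}. B k j * v j = 0"
        using B unfolding band_def by auto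
    qed auto
    finally show "(\<Sum>j\<in>{i-(r+s)..i+(r+s)}. A i k * B k j * v j) = A i k * zapp B v k"
      by (simp add: sum_distrib_left mult.assoc)
  qed
  also have "\<dots> = zapp A (zapp B v) i"
    using zapp_win[OF A order_refl] by simp
  finally show "zapp (zmat_mult A B) v i = zapp A (zapp B v) i" .
qed

lemma band_adj: "band r A \<Longrightarrow> band r (zmat_adj A)"
  unfolding band_def zmat_adj_def by (metis abs_minus_commute complex_cnj_zero)

lemma adj_mult: "zmat_adj (zmat_mult A B) = zmat_mult (zmat_adj B) (zmat_adj A)"
proof (intro ext)
  fix i j
  have "{k. cnj (B k i) \<noteq> 0 \<and> cnj (A j k) \<noteq> 0} = {k. A j k \<noteq> 0 \<and> B k i \<noteq> 0}" by auto
  then show "zmat_adj (zmat_mult A B) i j = zmat_mult (zmat_adj B) (zmat_adj A) i j"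
    unfolding zmat_adj_def zmat_mult_def by (simp add: cnj_sum mult.commute)
qed

lemma band_id: "band 0 zmat_id"
  unfolding band_def zmat_id_def by auto

lemma zapp_id: "zapp zmat_id v = v"
proof
  fix i
  show "zapp zmat_id v i = v i"
    using zapp_win[OF band_id, of 0 v i] by (simp add: zmat_id_def)
qed

lemma zapp_delta:
  assumes "band r A" shows "zapp A (delta j) i = A i j"
proof -
  have r: "0 \<le> r \<or> (\<forall>i j. A i j = 0)" using assms unfolding band_def by force
  show ?thesis
  proof (cases "\<bar>i - j\<bar> \<le> max r 0")
    case True
    have "zapp A (delta j) i = (\<Sum>k\<in>{i-max r 0..i+max r 0}. A i k * delta j k)"
      using zapp_win[OF assms] by simp
    also have "\<dots> = (\<Sum>k\<in>{j}. A i k * delta j k)"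
      by (rule sum.mono_neutral_right) (use True in \<open>auto simp: delta_def\<close>)
    finally show ?thesis by (simp add: delta_def)
  next
    case False
    then have "A i j = 0" using assms unfolding band_def by auto
    moreover have "zapp A (delta j) i = (\<Sum>k\<in>{i-max r 0..i+max r 0}. A i k * delta j k)"
      using zapp_win[OF assms] by simp
    moreover have "\<dots> = 0" using False by (intro sum.neutral) (auto simp: delta_def)
    ultimately show ?thesis by simp
  qed
qed

lemma band_pow: "band r U \<Longrightarrow> 0 \<le> r \<Longrightarrow> band (int n * r) (zmat_pow U n)"
proof (induction n)
  case 0 then show ?case using band_id by simp
next
  case (Suc n)
  have "band (r + int n * r) (zmat_pow U (Suc n))" using band_mult[OF Suc(2) Suc(1)[OF Suc(2,3)]] by simp
  then show ?case by (simp add: algebra_simps)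
qed

lemma zapp_pow: "band r U \<Longrightarrow> 0 \<le> r \<Longrightarrow> zapp (zmat_pow U n) v = (zapp U ^^ n) v"
proof (induction n)
  case 0 then show ?case by (simp add: zapp_id)
next
  case (Suc n)
  have "zapp (zmat_pow U (Suc n)) v = zapp U (zapp (zmat_pow U n) v)"
    using zapp_mult[OF Suc(2) band_pow[OF Suc(2,3)]] by simp
  then show ?case using Suc by simp
qed

lemma zapp_lin_sum:
  assumes "band r A" "finite K"
  shows "zapp A (\<lambda>j. \<Sum>k\<in>K. f k j) i = (\<Sum>k\<in>K. zapp A (f k) i)"
  using zapp_win[OF assms(1) order_refl] by (simp add: sum_distrib_left sum.swap[of _ K])

lemma zapp_lin2:
  assumes "band r A"
  shows "zapp A (\<lambda>j. a * v j + b * w j) i = a * zapp A v i + b * zapp A w i"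
  using zapp_win[OF assms(1) order_refl]
  by (simp add: algebra_simps sum.distrib sum_distrib_left)

lemma zapp_scale:
  assumes "band r A"
  shows "zapp A (\<lambda>j. a * v j) i = a * zapp A v i"
  using zapp_win[OF assms(1) order_refl]
  by (simp add: algebra_simps sum_distrib_left)

lemma zapp_zero: "zapp A (\<lambda>j. 0) = (\<lambda>i. 0)"
  unfolding zapp_def by simp

lemma zapp_matsum:
  assumes "finite K" "\<And>k. k \<in> K \<Longrightarrow> band R (A k)"
  shows "zapp (\<lambda>i j. \<Sum>k\<in>K. c k * A k i j) v i = (\<Sum>k\<in>K. c k * zapp (A k) v i)"
proof -
  have b: "band R (\<lambda>i j. \<Sum>k\<in>K. c k * A k i j)"
    using assms(2) unfolding band_def by (auto intro!: sum.neutral)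
  have "zapp (\<lambda>i j. \<Sum>k\<in>K. c k * A k i j) v i = (\<Sum>j\<in>{i-R..i+R}. (\<Sum>k\<in>K. c k * A k i j) * v j)"
    using zapp_win[OF b order_refl] by simp
  also have "\<dots> = (\<Sum>k\<in>K. c k * (\<Sum>j\<in>{i-R..i+R}. A k i j * v j))"
    by (simp add: sum_distrib_right sum_distrib_left sum.swap[of _ K] mult.assoc)
  also have "\<dots> = (\<Sum>k\<in>K. c k * zapp (A k) v i)"
    using zapp_win[OF assms(2) order_refl] by simp
  finally show ?thesis .
qed

lemma zapp_matadd:
  assumes "band R A" "band R B"
  shows "zapp (\<lambda>i j. A i j + B i j) v i = zapp A v i + zapp B v i"
proof -
  have b: "band R (\<lambda>i j. A i j + B i j)" using assms unfolding band_def by auto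
  show ?thesis using zapp_win[OF b order_refl] zapp_win[OF assms(1) order_refl] zapp_win[OF assms(2) order_refl]
    by (simp add: algebra_simps sum.distrib)
qed

lemma rho_sq: "cmod a < 1 \<Longrightarrow> rho a * rho a = 1 - a * cnj a"
proof -
  assume h: "cmod a < 1"
  have "(cmod a)\<^sup>2 < 1" using h by (simp add: abs_square_less_1)
  then have "0 \<le> 1 - (cmod a)\<^sup>2" by simp
  then have "rho a * rho a = complex_of_real (1 - (cmod a)\<^sup>2)"
  proof -
    assume t: "0 \<le> 1 - (cmod a)\<^sup>2"
    have "sqrt (1 - (cmod a)\<^sup>2) * sqrt (1 - (cmod a)\<^sup>2) = 1 - (cmod a)\<^sup>2"
      using t by simp
    then show ?thesis unfolding rho_def of_real_mult[symmetric] by simp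
  qed
  also have "\<dots> = 1 - a * cnj a" by (simp only: complex_norm_square[symmetric] of_real_diff of_real_1)
  finally show ?thesis .
qed

lemma rho_nz: "cmod a < 1 \<Longrightarrow> rho a \<noteq> 0"
proof -
  assume "cmod a < 1"
  then have "(cmod a)\<^sup>2 < 1" by (simp add: abs_square_less_1)
  then show ?thesis unfolding rho_def by simp
qed

lemma cnj_rho[simp]: "cnj (rho a) = rho a"
  unfolding rho_def by simp

lemma alg1: "r*r = 1 - a*b \<Longrightarrow> b*(a*x + r*y) + r*(r*x - b*(y::complex)) = x"
proof -
  assume h: "r*r = 1 - a*b"
  have "b*(a*x + r*y) + r*(r*x - b*y) = (a*b + r*r)*x" by (simp add: algebra_simps)
  then show ?thesis using h by simp
qed

lemma alg2: "r*r = 1 - a*b \<Longrightarrow> a*(b*x + r*y) + r*(r*x - a*(y::complex)) = x"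
  using alg1[of r b a x y] by (simp add: mult.commute)

lemma alg3: "r*r = 1 - a*b \<Longrightarrow> r*(a*x + r*y) - a*(r*x - b*(y::complex)) = y"
proof -
  assume h: "r*r = 1 - a*b"
  have "r*(a*x + r*y) - a*(r*x - b*y) = (a*b + r*r)*y" by (simp add: algebra_simps)
  then show ?thesis using h by simp
qed

lemma alg4: "r*r = 1 - a*b \<Longrightarrow> r*(b*x + r*y) - b*(r*x - a*(y::complex)) = y"
  using alg3[of r b a x y] by (simp add: mult.commute)

lemma band1_zapp: "band 1 A \<Longrightarrow> zapp A v i = A i (i-1) * v (i-1) + A i i * v i + A i (i+1) * v (i+1)"
proof -
  assume b: "band 1 A"
  have "{i-1..i+1} = {i-1, i, i+1}" by auto
  then show ?thesis using zapp_win[OF b order_refl, of v i] by simp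
qed

lemma theta_ev: "(i - e) mod 2 = 0 \<Longrightarrow> theta_blocks e \<alpha> i j =
   (if j = i then cnj (\<alpha> i) else if j = i+1 then rho (\<alpha> i) else 0)"
  unfolding theta_blocks_def Let_def by auto

lemma theta_od: "(i - e) mod 2 \<noteq> 0 \<Longrightarrow> theta_blocks e \<alpha> i j =
   (if j = i - 1 then rho (\<alpha> (i-1)) else if j = i then - \<alpha> (i-1) else 0)"
  unfolding theta_blocks_def Let_def by auto

lemma band_theta: "band 1 (theta_blocks e \<alpha>)"
  unfolding band_def
proof (intro allI impI)
  fix i j :: int assume h: "1 < \<bar>i - j\<bar>"
  then have "j \<noteq> i" "j \<noteq> i + 1" "j \<noteq> i - 1" by auto
  then show "theta_blocks e \<alpha> i j = 0"
    by (cases "(i - e) mod 2 = 0") (simp_all add: theta_ev theta_od)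
qed

lemma par_cases: fixes i e :: int obtains "(i - e) mod 2 = 0" "(i + 1 - e) mod 2 \<noteq> 0" "(i - 1 - e) mod 2 \<noteq> 0"
  | "(i - e) mod 2 \<noteq> 0" "(i + 1 - e) mod 2 = 0" "(i - 1 - e) mod 2 = 0"
proof (cases "(i - e) mod 2 = 0")
  case True
  then have "(i + 1 - e) mod 2 \<noteq> 0" "(i - 1 - e) mod 2 \<noteq> 0" by presburger+
  then show ?thesis using True by (intro that(1))
next
  case False
  then have "(i + 1 - e) mod 2 = 0" "(i - 1 - e) mod 2 = 0" by presburger+
  then show ?thesis using False by (intro that(2))
qed

lemma zapp_theta_ev: "(i - e) mod 2 = 0 \<Longrightarrow>
   zapp (theta_blocks e \<alpha>) v i = cnj (\<alpha> i) * v i + rho (\<alpha> i) * v (i+1)"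
  by (simp add: band1_zapp[OF band_theta] theta_ev)

lemma zapp_theta_od: "(i - e) mod 2 \<noteq> 0 \<Longrightarrow>
   zapp (theta_blocks e \<alpha>) v i = rho (\<alpha> (i-1)) * v (i-1) - \<alpha> (i-1) * v i"
  by (simp add: band1_zapp[OF band_theta] theta_od)

lemma zapp_thetaA_ev: "(i - e) mod 2 = 0 \<Longrightarrow>
   zapp (zmat_adj (theta_blocks e \<alpha>)) v i = \<alpha> i * v i + rho (\<alpha> i) * v (i+1)"
proof -
  assume h: "(i - e) mod 2 = 0"
  then have h1: "(i + 1 - e) mod 2 \<noteq> 0" "(i - 1 - e) mod 2 \<noteq> 0" by presburger+
  show ?thesis
    by (subst band1_zapp[OF band_adj[OF band_theta]], simp add: zmat_adj_def theta_ev[OF h] theta_od[OF h1(1)] theta_od[OF h1(2)])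
qed

lemma zapp_thetaA_od: "(i - e) mod 2 \<noteq> 0 \<Longrightarrow>
   zapp (zmat_adj (theta_blocks e \<alpha>)) v i = rho (\<alpha> (i-1)) * v (i-1) - cnj (\<alpha> (i-1)) * v i"
proof -
  assume h: "(i - e) mod 2 \<noteq> 0"
  then have h1: "(i + 1 - e) mod 2 = 0" "(i - 1 - e) mod 2 = 0" by presburger+
  show ?thesis
    by (subst band1_zapp[OF band_adj[OF band_theta]], simp add: zmat_adj_def theta_od[OF h] theta_ev[OF h1(1)] theta_ev[OF h1(2)])
qed

lemma theta_unit1:
  assumes "in_disk_seq \<alpha>"
  shows "zapp (theta_blocks e \<alpha>) (zapp (zmat_adj (theta_blocks e \<alpha>)) v) = v"
proof
  fix i
  have sq: "\<And>n. rho (\<alpha> n) * rho (\<alpha> n) = 1 - \<alpha> n * cnj (\<alpha> n)"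
    using assms rho_sq unfolding in_disk_seq_def by auto
  show "zapp (theta_blocks e \<alpha>) (zapp (zmat_adj (theta_blocks e \<alpha>)) v) i = v i"
  proof (cases i e rule: par_cases)
    case 1
    then show ?thesis
      using sq[of i] apply (simp add: zapp_theta_ev zapp_thetaA_ev zapp_thetaA_od)
 apply (rule alg1, simp) done
  next
    case 2
    then show ?thesis
      using sq[of "i-1"] apply (simp add: zapp_theta_od zapp_thetaA_ev zapp_thetaA_od)
 apply (rule alg3, simp) done
  qed
qed

lemma theta_unit2:
  assumes "in_disk_seq \<alpha>"
  shows "zapp (zmat_adj (theta_blocks e \<alpha>)) (zapp (theta_blocks e \<alpha>) v) = v"
proof
  fix i
  have sq: "\<And>n. rho (\<alpha> n) * rho (\<alpha> n) = 1 - \<alpha> n * cnj (\<alpha> n)"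
    using assms rho_sq unfolding in_disk_seq_def by auto
  show "zapp (zmat_adj (theta_blocks e \<alpha>)) (zapp (theta_blocks e \<alpha>) v) i = v i"
  proof (cases i e rule: par_cases)
    case 1
    then show ?thesis
      using sq[of i] apply (simp add: zapp_theta_ev zapp_theta_od zapp_thetaA_ev)
 apply (rule alg2, simp) done
  next
    case 2
    then show ?thesis
      using sq[of "i-1"] apply (simp add: zapp_theta_ev zapp_theta_od zapp_thetaA_od)
 apply (rule alg4, simp) done
  qed
qed

lemma band_cmv: "band 2 (cmv \<alpha>)"
  using band_mult[OF band_theta band_theta] unfolding cmv_def cmvL_def cmvM_def by simp

lemma band_cmvA: "band 2 (zmat_adj (cmv \<alpha>))"
  using band_adj[OF band_cmv] .

lemma zapp_cmv: "zapp (cmv \<alpha>) v = zapp (cmvL \<alpha>) (zapp (cmvM \<alpha>) v)"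
  unfolding cmv_def cmvL_def cmvM_def using zapp_mult[OF band_theta band_theta] by simp

lemma zapp_cmvA: "zapp (zmat_adj (cmv \<alpha>)) v = zapp (zmat_adj (cmvM \<alpha>)) (zapp (zmat_adj (cmvL \<alpha>)) v)"
  unfolding cmv_def cmvL_def cmvM_def adj_mult
  using zapp_mult[OF band_adj[OF band_theta] band_adj[OF band_theta]] by simp

lemma cmv_unit1: "in_disk_seq \<alpha> \<Longrightarrow> zapp (cmv \<alpha>) (zapp (zmat_adj (cmv \<alpha>)) v) = v"
  unfolding zapp_cmv zapp_cmvA cmvL_def cmvM_def by (simp add: theta_unit1)

lemma cmv_unit2: "in_disk_seq \<alpha> \<Longrightarrow> zapp (zmat_adj (cmv \<alpha>)) (zapp (cmv \<alpha>) v) = v"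
  unfolding zapp_cmv zapp_cmvA cmvL_def cmvM_def by (simp add: theta_unit2)

lemma band_zpow: "band (2 * \<bar>m\<bar>) (zmat_zpow (cmv \<alpha>) m)"
proof (cases "0 \<le> m")
  case True
  then show ?thesis using band_pow[OF band_cmv, of "nat m"] unfolding zmat_zpow_def by (simp add: mult.commute)
next
  case False
  then show ?thesis using band_pow[OF band_cmvA, of "nat (-m)"] unfolding zmat_zpow_def by (simp add: mult.commute)
qed

lemma zapp_zpow: "zapp (zmat_zpow (cmv \<alpha>) m) v =
   (if 0 \<le> m then (zapp (cmv \<alpha>) ^^ nat m) v else (zapp (zmat_adj (cmv \<alpha>)) ^^ nat (-m)) v)"
  unfolding zmat_zpow_def using zapp_pow[OF band_cmv] zapp_pow[OF band_cmvA] by simp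

lemma iter_eig:
  assumes "band r A" "zapp A u = (\<lambda>i. z * u i)"
  shows "(zapp A ^^ n) u = (\<lambda>i. z ^ n * u i)"
proof (induction n)
  case 0 then show ?case by simp
next
  case (Suc n)
  have "(zapp A ^^ Suc n) u = zapp A (\<lambda>i. z ^ n * u i)" using Suc by simp
  also have "\<dots> = (\<lambda>i. z ^ n * zapp A u i)" using zapp_scale[OF assms(1)] by auto
  also have "\<dots> = (\<lambda>i. z ^ Suc n * u i)" using assms(2) by (simp add: algebra_simps)
  finally show ?case .
qed

lemma cmvA_eig:
  assumes "in_disk_seq \<alpha>" "z \<noteq> 0" "zapp (cmv \<alpha>) u = (\<lambda>i. z * u i)"
  shows "zapp (zmat_adj (cmv \<alpha>)) u = (\<lambda>i. inverse z * u i)"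
proof
  fix i
  have "u = zapp (zmat_adj (cmv \<alpha>)) (\<lambda>i. z * u i)" using cmv_unit2[OF assms(1), of u] assms(3) by simp
  then have "u i = z * zapp (zmat_adj (cmv \<alpha>)) u i" using zapp_scale[OF band_cmvA] by metis
  then show "zapp (zmat_adj (cmv \<alpha>)) u i = inverse z * u i" using assms(2) by (simp add: field_simps)
qed

lemma zpow_eig:
  assumes "in_disk_seq \<alpha>" "z \<noteq> 0" "zapp (cmv \<alpha>) u = (\<lambda>i. z * u i)"
  shows "zapp (zmat_zpow (cmv \<alpha>) m) u = (\<lambda>i. z powi m * u i)"
proof (cases "0 \<le> m")
  case True
  then show ?thesis unfolding zapp_zpow using iter_eig[OF band_cmv assms(3)] by (simp add: power_int_def)
next
  case False
  then show ?thesis unfolding zapp_zpow using iter_eig[OF band_cmvA cmvA_eig[OF assms]] by (simp add: power_int_def)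
qed

lemma disc_eig:
  assumes "in_disk_seq \<alpha>" "z \<noteq> 0" "zapp (cmv \<alpha>) u = (\<lambda>i. z * u i)"
    and deg: "degree (disc_poly \<beta> p) \<le> p"
  shows "zapp (disc_apply \<beta> p (cmv \<alpha>)) u = (\<lambda>i. discriminant \<beta> p z * u i)"
proof
  fix i
  let ?h = "int (p div 2)"
  let ?T = "disc_poly \<beta> p"
  have b: "\<And>k. k \<in> {..p} \<Longrightarrow> band (2 * int p) (zmat_zpow (cmv \<alpha>) (int k - ?h))"
    by (rule band_mono[OF band_zpow]) auto
  have "zapp (disc_apply \<beta> p (cmv \<alpha>)) u i = (\<Sum>k\<le>p. coeff ?T k * zapp (zmat_zpow (cmv \<alpha>) (int k - ?h)) u i)"
    unfolding disc_apply_def by (rule zapp_matsum[OF _ b]) auto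
  also have "\<dots> = (\<Sum>k\<le>p. coeff ?T k * (z ^ k * z powi (- ?h)) * u i)"
  proof -
    have pw: "\<And>k. z powi (int k - ?h) = z ^ k * z powi (- ?h)"
      using power_int_add[of z _ "- ?h"] assms(2) by simp
    show ?thesis using zpow_eig[OF assms(1-3)] by (simp add: pw mult.assoc)
  qed
  also have "\<dots> = z powi (- ?h) * (\<Sum>k\<le>p. coeff ?T k * z ^ k) * u i"
    by (simp add: sum_distrib_left sum_distrib_right algebra_simps)
  also have "(\<Sum>k\<le>p. coeff ?T k * z ^ k) = poly ?T z"
    unfolding poly_altdef
    by (rule sum.mono_neutral_right) (use deg in \<open>auto simp: coeff_eq_0\<close>)
  finally show "zapp (disc_apply \<beta> p (cmv \<alpha>)) u i = discriminant \<beta> p z * u i"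
    unfolding discriminant_def by simp
qed

lemma shift_pow: "zmat_pow shiftR n i j = (if i = j + int n then 1 else 0)"
proof (induction n arbitrary: i j)
  case 0 then show ?case by (simp add: zmat_id_def)
next
  case (Suc n)
  have b: "band 1 shiftR" unfolding band_def shiftR_def by auto
  have "zmat_pow shiftR (Suc n) i j = (\<Sum>k\<in>{i-1..i+1}. shiftR i k * zmat_pow shiftR n k j)"
    using mult_win[OF b order_refl] by simp
  also have "\<dots> = (\<Sum>k\<in>{i-1}. shiftR i k * zmat_pow shiftR n k j)"
    by (rule sum.mono_neutral_right) (auto simp: shiftR_def)
  finally show ?case using Suc by (auto simp: shiftR_def)
qed

lemma shiftA_pow: "zmat_pow (zmat_adj shiftR) n i j = (if j = i + int n then 1 else 0)"
proof (induction n arbitrary: i j)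
  case 0 then show ?case by (simp add: zmat_id_def)
next
  case (Suc n)
  have b: "band 1 (zmat_adj shiftR)" unfolding band_def shiftR_def zmat_adj_def by auto
  have "zmat_pow (zmat_adj shiftR) (Suc n) i j = (\<Sum>k\<in>{i-1..i+1}. zmat_adj shiftR i k * zmat_pow (zmat_adj shiftR) n k j)"
    using mult_win[OF b order_refl] by simp
  also have "\<dots> = (\<Sum>k\<in>{i+1}. zmat_adj shiftR i k * zmat_pow (zmat_adj shiftR) n k j)"
    by (rule sum.mono_neutral_right) (auto simp: shiftR_def zmat_adj_def)
  finally show ?case using Suc by (auto simp: shiftR_def zmat_adj_def)
qed

definition shiftsum :: "nat \<Rightarrow> zmat" where
  "shiftsum p = (\<lambda>i j. zmat_zpow shiftR (int p) i j + zmat_zpow shiftR (- int p) i j)"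

lemma shiftsum_eq: "p > 0 \<Longrightarrow> shiftsum p i j = (if i = j + int p then 1 else 0) + (if j = i + int p then 1 else 0)"
  unfolding shiftsum_def zmat_zpow_def by (simp add: shift_pow shiftA_pow)

lemma band_shiftsum: "p > 0 \<Longrightarrow> band (int p) (shiftsum p)"
  unfolding band_def by (auto simp: shiftsum_eq)

lemma zapp_shiftsum: "p > 0 \<Longrightarrow> zapp (shiftsum p) v i = v (i - int p) + v (i + int p)"
proof -
  assume p: "p > 0"
  have "zapp (shiftsum p) v i = (\<Sum>j\<in>{i - int p..i + int p}. shiftsum p i j * v j)"
    using zapp_win[OF band_shiftsum[OF p] order_refl] by simp
  also have "\<dots> = (\<Sum>j\<in>{i - int p, i + int p}. shiftsum p i j * v j)"
    by (rule sum.mono_neutral_right) (auto simp: shiftsum_eq[OF p])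
  also have "\<dots> = v (i - int p) + v (i + int p)"
    using p by (simp add: shiftsum_eq[OF p])
  finally show ?thesis .
qed

type_synonym cm2 = "complex \<times> complex \<times> complex \<times> complex"

fun cm_mult :: "cm2 \<Rightarrow> cm2 \<Rightarrow> cm2" where
  "cm_mult (a,b,c,d) (e,f,g,h) = (a*e + b*g, a*f + b*h, c*e + d*g, c*f + d*h)"

fun cm_app :: "cm2 \<Rightarrow> complex \<times> complex \<Rightarrow> complex \<times> complex" where
  "cm_app (a,b,c,d) (x,y) = (a*x + b*y, c*x + d*y)"

fun cm_tr :: "cm2 \<Rightarrow> complex" where "cm_tr (a,b,c,d) = a + d"
fun cm_det :: "cm2 \<Rightarrow> complex" where "cm_det (a,b,c,d) = a*d - b*c"
fun cm_scale :: "complex \<Rightarrow> cm2 \<Rightarrow> cm2" where "cm_scale s (a,b,c,d) = (s*a, s*b, s*c, s*d)"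

fun pm2_eval :: "pm2 \<Rightarrow> complex \<Rightarrow> cm2" where
  "pm2_eval (a,b,c,d) z = (poly a z, poly b z, poly c z, poly d z)"

lemma cm_mult_assoc: "cm_mult (cm_mult X Y) Z = cm_mult X (cm_mult Y Z)"
  by (cases X, cases Y, cases Z) (simp add: algebra_simps)

lemma cm_app_mult: "cm_app (cm_mult X Y) v = cm_app X (cm_app Y v)"
  by (cases X, cases Y, cases v) (simp add: algebra_simps)

lemma cm_det_mult: "cm_det (cm_mult X Y) = cm_det X * cm_det Y"
  by (cases X, cases Y) (simp add: algebra_simps)

lemma cm_scale_mult1: "cm_mult (cm_scale s X) Y = cm_scale s (cm_mult X Y)"
  by (cases X, cases Y) (simp add: algebra_simps)

lemma cm_scale_mult2: "cm_mult X (cm_scale s Y) = cm_scale s (cm_mult X Y)"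
  by (cases X, cases Y) (simp add: algebra_simps)

lemma cm_scale_scale: "cm_scale s (cm_scale t X) = cm_scale (s*t) X"
  by (cases X) (simp add: algebra_simps)

lemma pm2_eval_mult: "pm2_eval (pm2_mult X Y) z = cm_mult (pm2_eval X z) (pm2_eval Y z)"
  by (cases X, cases Y) (simp add: pm2_mult_def)

lemma pm2_eval_id: "pm2_eval pm2_id z = (1,0,0,1)"
  by (simp add: pm2_id_def)

definition Tstep :: "(int \<Rightarrow> complex) \<Rightarrow> complex \<Rightarrow> int \<Rightarrow> cm2" where
  "Tstep \<alpha> z n = (let r = inverse (rho (\<alpha> n)) in
     if even n then (- r * \<alpha> n, r / z, r * z, - r * cnj (\<alpha> n))
     else (- r * cnj (\<alpha> n), r, r, - r * \<alpha> n))"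

fun Tprod :: "(int \<Rightarrow> complex) \<Rightarrow> complex \<Rightarrow> nat \<Rightarrow> cm2" where
  "Tprod \<alpha> z 0 = (1,0,0,1)"
| "Tprod \<alpha> z (Suc k) = cm_mult (Tstep \<alpha> z (int k)) (Tprod \<alpha> z k)"

lemma eval_transfer: "pm2_eval (transfer \<alpha> n) z =
   (inverse (rho (\<alpha> n)) * z, - inverse (rho (\<alpha> n)) * cnj (\<alpha> n),
    - inverse (rho (\<alpha> n)) * \<alpha> n * z, inverse (rho (\<alpha> n)))"
  by (simp add: transfer_def Let_def)

lemma two_step:
  assumes "z \<noteq> 0" "even n"
  shows "cm_mult (Tstep \<alpha> z (n+1)) (Tstep \<alpha> z n) =
         cm_scale (inverse z) (cm_mult (pm2_eval (transfer \<alpha> (n+1)) z) (pm2_eval (transfer \<alpha> n) z))"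
  using assms unfolding eval_transfer Tstep_def Let_def by (simp add: field_simps)

lemma Tprod_even:
  assumes "z \<noteq> 0"
  shows "Tprod \<alpha> z (2*k) = cm_scale (inverse z ^ k) (pm2_eval (transfer_prod \<alpha> (2*k)) z)"
proof (induction k)
  case 0 then show ?case by (simp add: pm2_eval_id)
next
  case (Suc k)
  have e: "2 * Suc k = Suc (Suc (2*k))" by simp
  let ?M1 = "pm2_eval (transfer \<alpha> (int (2*k) + 1)) z"
  let ?M0 = "pm2_eval (transfer \<alpha> (int (2*k))) z"
  let ?P = "pm2_eval (transfer_prod \<alpha> (2*k)) z"
  have ts: "cm_mult (Tstep \<alpha> z (int (2*k) + 1)) (Tstep \<alpha> z (int (2*k))) = cm_scale (inverse z) (cm_mult ?M1 ?M0)"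
    by (rule two_step) (auto simp: assms)
  have "Tprod \<alpha> z (2 * Suc k) = cm_mult (cm_mult (Tstep \<alpha> z (int (2*k) + 1)) (Tstep \<alpha> z (int (2*k)))) (Tprod \<alpha> z (2*k))"
    unfolding e by (simp add: cm_mult_assoc add.commute)
  also have "\<dots> = cm_mult (cm_scale (inverse z) (cm_mult ?M1 ?M0)) (cm_scale (inverse z ^ k) ?P)"
    by (simp only: ts Suc)
  also have "\<dots> = cm_scale (inverse z ^ Suc k) (cm_mult ?M1 (cm_mult ?M0 ?P))"
    by (simp only: cm_scale_mult1 cm_scale_mult2 cm_scale_scale cm_mult_assoc power_Suc mult.commute)
  also have "cm_mult ?M1 (cm_mult ?M0 ?P) = pm2_eval (transfer_prod \<alpha> (2 * Suc k)) z"
    unfolding e by (simp add: pm2_eval_mult add.commute)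
  finally show ?case .
qed

lemma Tprod_tr:
  assumes "z \<noteq> 0" "even p"
  shows "cm_tr (Tprod \<alpha> z p) = discriminant \<alpha> p z"
proof -
  obtain k where k: "p = 2*k" using assms(2) by auto
  obtain a b c d where abcd: "transfer_prod \<alpha> p = (a,b,c,d)" by (cases "transfer_prod \<alpha> p") auto
  have "int (p div 2) = int k" using k by simp
  then have "z powi (- int (p div 2)) = inverse z ^ k" by (simp add: power_int_minus power_inverse)
  then show ?thesis
    using Tprod_even[OF assms(1), of \<alpha> k] unfolding k[symmetric] discriminant_def disc_poly_def abcd
    by (simp add: pm2_trace_def algebra_simps)
qed

lemma Tstep_det:
  assumes "in_disk_seq \<alpha>" "z \<noteq> 0" shows "cm_det (Tstep \<alpha> z n) = -1"
proof -
  have sq: "rho (\<alpha> n) * rho (\<alpha> n) = 1 - \<alpha> n * cnj (\<alpha> n)" and nz: "rho (\<alpha> n) \<noteq> 0"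
    using assms rho_sq rho_nz unfolding in_disk_seq_def by auto
  have "cm_det (Tstep \<alpha> z n) = (\<alpha> n * cnj (\<alpha> n) - 1) / (rho (\<alpha> n) * rho (\<alpha> n))"
    unfolding Tstep_def Let_def using assms(2) nz by (simp add: field_simps)
  also have "\<dots> = -1" using sq nz by (simp add: field_simps)
  finally show ?thesis .
qed

lemma Tprod_det: "in_disk_seq \<alpha> \<Longrightarrow> z \<noteq> 0 \<Longrightarrow> cm_det (Tprod \<alpha> z k) = (-1) ^ k"
  by (induction k) (simp_all add: cm_det_mult Tstep_det)

lemma algM: "r*r = 1 - a*b \<Longrightarrow> r \<noteq> 0 \<Longrightarrow> r*x - a*((- inverse r * b)*x + inverse r * y) = inverse r * x + (- inverse r * a) * (y::complex)"
proof -
  assume h: "r*r = 1 - a*b" "r \<noteq> 0"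
  have "r * (r*x - a*((- inverse r * b)*x + inverse r * y)) = r * (inverse r * x + (- inverse r * a) * y) + (r*r - (1 - a*b))*x"
    using h(2) by (simp add: field_simps)
  then show ?thesis using h by simp
qed

lemma algL: "r*r = 1 - a*b \<Longrightarrow> r \<noteq> 0 \<Longrightarrow> z \<noteq> 0 \<Longrightarrow>
  r*w - a*((inverse r * z)*x + (- inverse r * b)*w) = z * ((- inverse r * a) * x + (inverse r / z) * (w::complex))"
proof -
  assume h: "r*r = 1 - a*b" "r \<noteq> 0" "z \<noteq> 0"
  have "r * (r*w - a*((inverse r * z)*x + (- inverse r * b)*w)) = r * (z * ((- inverse r * a) * x + (inverse r / z) * w)) + (r*r - (1 - a*b))*w"
    using h(2,3) by (simp add: field_simps)
  then show ?thesis using h by simp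
qed

definition sol :: "(int \<Rightarrow> complex) \<Rightarrow> complex \<Rightarrow> (int \<Rightarrow> complex) \<Rightarrow> (int \<Rightarrow> complex) \<Rightarrow> bool" where
  "sol \<alpha> z u w \<longleftrightarrow> (\<forall>n. cm_app (Tstep \<alpha> z n) (u n, w n) = (u (n+1), w (n+1)))"

lemma sol_D:
  assumes "sol \<alpha> z u w"
  shows "even n \<Longrightarrow> u (n+1) = - inverse (rho (\<alpha> n)) * \<alpha> n * u n + inverse (rho (\<alpha> n)) / z * w n
               \<and> w (n+1) = inverse (rho (\<alpha> n)) * z * u n + - inverse (rho (\<alpha> n)) * cnj (\<alpha> n) * w n"
    and "odd n \<Longrightarrow> u (n+1) = - inverse (rho (\<alpha> n)) * cnj (\<alpha> n) * u n + inverse (rho (\<alpha> n)) * w n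
               \<and> w (n+1) = inverse (rho (\<alpha> n)) * u n + - inverse (rho (\<alpha> n)) * \<alpha> n * w n"
  using assms[unfolded sol_def, rule_format, of n] unfolding Tstep_def Let_def by auto

lemma sol_M:
  assumes "in_disk_seq \<alpha>" "z \<noteq> 0" "sol \<alpha> z u w"
  shows "zapp (cmvM \<alpha>) u = w"
proof
  fix i
  have sq: "\<And>n. rho (\<alpha> n) * rho (\<alpha> n) = 1 - \<alpha> n * cnj (\<alpha> n)" and nz: "\<And>n. rho (\<alpha> n) \<noteq> 0"
    using assms rho_sq rho_nz unfolding in_disk_seq_def by auto
  show "zapp (cmvM \<alpha>) u i = w i"
  proof (cases "(i - 1) mod 2 = 0")
    case True
    then have o: "odd i" by presburger
    show ?thesis unfolding cmvM_def zapp_theta_ev[OF True]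
      using sol_D(2)[OF assms(3) o] nz[of i] by (simp add: field_simps)
  next
    case False
    then have o: "odd (i - 1)" by presburger
    have e: "i - 1 + 1 = i" by simp
    show ?thesis unfolding cmvM_def zapp_theta_od[OF False]
      using sol_D(2)[OF assms(3) o] unfolding e
      using algM[OF sq nz, of "i-1"] by simp
  qed
qed

lemma sol_L:
  assumes "in_disk_seq \<alpha>" "z \<noteq> 0" "sol \<alpha> z u w"
  shows "zapp (cmvL \<alpha>) w = (\<lambda>i. z * u i)"
proof
  fix i
  have sq: "\<And>n. rho (\<alpha> n) * rho (\<alpha> n) = 1 - \<alpha> n * cnj (\<alpha> n)" and nz: "\<And>n. rho (\<alpha> n) \<noteq> 0"
    using assms rho_sq rho_nz unfolding in_disk_seq_def by auto
  show "zapp (cmvL \<alpha>) w i = z * u i"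
  proof (cases "(i - 0) mod 2 = 0")
    case True
    then have o: "even i" by presburger
    show ?thesis unfolding cmvL_def zapp_theta_ev[OF True]
      using sol_D(1)[OF assms(3) o] nz[of i] assms(2) by (simp add: field_simps)
  next
    case False
    then have o: "even (i - 1)" by presburger
    have e: "i - 1 + 1 = i" by simp
    show ?thesis unfolding cmvL_def zapp_theta_od[OF False]
      using sol_D(1)[OF assms(3) o] unfolding e
      using algL[OF sq nz assms(2), of "i-1"] by simp
  qed
qed

lemma sol_eig:
  assumes "in_disk_seq \<alpha>" "z \<noteq> 0" "sol \<alpha> z u w"
  shows "zapp (cmv \<alpha>) u = (\<lambda>i. z * u i)"
  unfolding zapp_cmv sol_M[OF assms] sol_L[OF assms] ..

lemma dm_step1:
  fixes n p :: int assumes "p > 0" "n mod p + 1 < p"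
  shows "(n+1) div p = n div p" "(n+1) mod p = n mod p + 1"
proof -
  have e: "n + 1 = (n mod p + 1) + (n div p) * p" by simp
  have a: "0 \<le> n mod p" using assms by simp
  have "(n+1) div p = ((n mod p + 1) + (n div p) * p) div p" using e by (rule arg_cong)
  also have "\<dots> = n div p + (n mod p + 1) div p" by (rule div_mult_self1) (use assms in simp)
  also have "(n mod p + 1) div p = 0" using assms a by (intro div_pos_pos_trivial) auto
  finally show "(n+1) div p = n div p" by simp
  have "(n+1) mod p = ((n mod p + 1) + (n div p) * p) mod p" using e by (rule arg_cong)
  also have "\<dots> = (n mod p + 1) mod p" by (rule mod_mult_self1)
  also have "\<dots> = n mod p + 1" using assms a by (intro mod_pos_pos_trivial) auto
  finally show "(n+1) mod p = n mod p + 1" .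
qed

lemma dm_step2:
  fixes n p :: int assumes "p > 0" "n mod p + 1 = p"
  shows "(n+1) div p = n div p + 1" "(n+1) mod p = 0"
proof -
  have e0: "n + 1 = (n mod p + 1) + (n div p) * p" by simp
  have e: "n + 1 = (n div p + 1) * p" unfolding e0 assms(2) by (simp add: algebra_simps)
  show "(n+1) div p = n div p + 1" unfolding e using assms by simp
  show "(n+1) mod p = 0" unfolding e by simp
qed

lemma dm_per:
  fixes n p :: int assumes "p > 0"
  shows "(n+p) div p = n div p + 1" "(n+p) mod p = n mod p"
  using assms by simp_all

lemma per_nat: "periodic_seq \<alpha> p \<Longrightarrow> \<alpha> (m + int p * int k) = \<alpha> m"
proof (induction k arbitrary: m)
  case 0 then show ?case by simp
next
  case (Suc k)
  have "\<alpha> (m + int p * int (Suc k)) = \<alpha> ((m + int p * int k) + int p)" by (simp add: algebra_simps)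
  also have "\<dots> = \<alpha> (m + int p * int k)" using Suc(2) unfolding periodic_seq_def by simp
  finally show ?case using Suc by simp
qed

lemma per_mod:
  assumes "periodic_seq \<alpha> p" "p > 0"
  shows "\<alpha> n = \<alpha> (n mod int p)"
proof (cases "0 \<le> n div int p")
  case True
  have "n = n mod int p + int p * int (nat (n div int p))" using True by simp
  then show ?thesis using per_nat[OF assms(1)] by metis
next
  case False
  have "n mod int p = n + int p * int (nat (- (n div int p)))" using False by (simp add: algebra_simps minus_div_mult_eq_mod[symmetric])
  then show ?thesis using per_nat[OF assms(1)] by metis
qed

lemma even_mod_p: "even p \<Longrightarrow> even (n mod int p) \<longleftrightarrow> even n"
proof -
  assume "even p"
  then have "2 dvd int p" by simp
  then show ?thesis by (simp add: dvd_mod_iff)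
qed

lemma Tstep_per:
  assumes "periodic_seq \<alpha> p" "p > 0" "even p"
  shows "Tstep \<alpha> z n = Tstep \<alpha> z (n mod int p)"
  unfolding Tstep_def using per_mod[OF assms(1,2), of n, symmetric] even_mod_p[OF assms(3), of n] by (simp add: Let_def)

fun ps :: "complex \<Rightarrow> complex \<times> complex \<Rightarrow> complex \<times> complex" where
  "ps s (x,y) = (s*x, s*y)"

lemma cm_app_ps: "cm_app T (ps s v) = ps s (cm_app T v)"
  by (cases T, cases v) (simp add: algebra_simps)

lemma ps_ps: "ps s (ps t v) = ps (s*t) v"
  by (cases v) simp

lemma ps_1: "ps 1 v = v" by (cases v) simp

lemma cm_app_id: "cm_app (1,0,0,1) v = v" by (cases v) simp

definition Phi :: "(int \<Rightarrow> complex) \<Rightarrow> nat \<Rightarrow> complex \<Rightarrow> complex \<Rightarrow> complex \<times> complex \<Rightarrow> int \<Rightarrow> complex \<times> complex" where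
  "Phi \<alpha> p z l v n = ps (l powi (n div int p)) (cm_app (Tprod \<alpha> z (nat (n mod int p))) v)"

lemma floq_sol:
  assumes per: "periodic_seq \<alpha> p" and ev: "even p" and p0: "p > 0" and l0: "l \<noteq> 0"
    and eig: "cm_app (Tprod \<alpha> z p) v = ps l v"
  shows "cm_app (Tstep \<alpha> z n) (Phi \<alpha> p z l v n) = Phi \<alpha> p z l v (n+1)"
proof -
  define r where "r = n mod int p"
  define q where "q = n div int p"
  have r0: "0 \<le> r" "r < int p" using p0 unfolding r_def by auto
  have T: "Tstep \<alpha> z n = Tstep \<alpha> z (int (nat r))" using Tstep_per[OF per p0 ev, of z n] r0 unfolding r_def by simp
  have Pn: "Phi \<alpha> p z l v n = ps (l powi q) (cm_app (Tprod \<alpha> z (nat r)) v)"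
    unfolding Phi_def r_def q_def ..
  show ?thesis
  proof (cases "r + 1 < int p")
    case True
    have d: "(n+1) div int p = q" "(n+1) mod int p = r + 1"
      using dm_step1[of "int p" n] p0 True unfolding r_def q_def by auto
    have nr: "nat (r + 1) = Suc (nat r)" using r0 by simp
    have Pn1: "Phi \<alpha> p z l v (n+1) = ps (l powi q) (cm_app (Tprod \<alpha> z (nat (r+1))) v)"
      unfolding Phi_def d ..
    show ?thesis unfolding Pn Pn1 nr T
      by (simp only: Tprod.simps cm_app_ps cm_app_mult)
  next
    case False
    then have rp: "r + 1 = int p" using r0 by simp
    have d: "(n+1) div int p = q + 1" "(n+1) mod int p = 0"
      using dm_step2[of "int p" n] p0 rp unfolding r_def q_def by auto
    have nr: "p = Suc (nat r)" using r0 rp by simp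
    have "cm_app (Tstep \<alpha> z n) (Phi \<alpha> p z l v n) = ps (l powi q) (cm_app (Tprod \<alpha> z p) v)"
      unfolding Pn T using nr by (simp only: Tprod.simps cm_app_ps cm_app_mult)
    also have "\<dots> = ps (l powi (q + 1)) v"
      unfolding eig ps_ps using l0 by (simp add: power_int_add)
    also have "\<dots> = Phi \<alpha> p z l v (n+1)"
      unfolding Phi_def d by (simp add: cm_app_id)
    finally show ?thesis .
  qed
qed

lemma floq_per:
  assumes "p > 0" "l \<noteq> 0"
  shows "Phi \<alpha> p z l v (n + int p) = ps l (Phi \<alpha> p z l v n)"
  unfolding Phi_def using assms by (simp add: ps_ps power_int_add mult.commute)

lemma floq_sol2:
  assumes "periodic_seq \<alpha> p" "even p" "p > 0" "l \<noteq> 0" "cm_app (Tprod \<alpha> z p) v = ps l v"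
  shows "sol \<alpha> z (\<lambda>n. fst (Phi \<alpha> p z l v n)) (\<lambda>n. snd (Phi \<alpha> p z l v n))"
  unfolding sol_def using floq_sol[OF assms] by simp

lemma floq_nz:
  assumes "in_disk_seq \<alpha>" "even p" "p > 0" "z \<noteq> 0" "v \<noteq> (0,0)"
  shows "\<exists>n. fst (Phi \<alpha> p z l v n) \<noteq> 0"
proof (cases "fst v = 0")
  case False
  have "fst (Phi \<alpha> p z l v 0) = fst v" unfolding Phi_def by (cases v) simp
  then show ?thesis using False by metis
next
  case True
  obtain x y where v: "v = (x,y)" by (cases v)
  have y: "y \<noteq> 0" "x = 0" using True assms(5) v by auto
  have p2: "2 \<le> p" using assms(2,3) by presburger
  have d: "1 div int p = 0" "1 mod int p = 1" using p2 by auto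
  have nz: "rho (\<alpha> 0) \<noteq> 0" using assms(1) rho_nz unfolding in_disk_seq_def by auto
  have "fst (Phi \<alpha> p z l v 1) = inverse (rho (\<alpha> 0)) / z * y"
    unfolding Phi_def d v using y by (simp add: Tstep_def Let_def)
  also have "\<dots> \<noteq> 0" using y nz assms(4) by simp
  finally show ?thesis by metis
qed

lemma eigvec2:
  assumes "l * l - cm_tr T * l + cm_det T = 0"
  shows "\<exists>v. v \<noteq> (0,0) \<and> cm_app T v = ps l v"
proof -
  obtain a b c d where T: "T = (a,b,c,d)" by (cases T) auto
  have h: "l * l - (a + d) * l + (a*d - b*c) = 0" using assms T by simp
  show ?thesis
  proof (cases "b \<noteq> 0 \<or> a \<noteq> l")
    case True
    have "cm_app T (b, l - a) = ps l (b, l - a)"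
      unfolding T using h by (simp add: algebra_simps)
    then show ?thesis using True by (intro exI[of _ "(b, l - a)"]) auto
  next
    case False
    then have ab: "b = 0" "a = l" by auto
    show ?thesis
    proof (cases "c \<noteq> 0 \<or> d \<noteq> l")
      case True
      have "cm_app T (l - d, c) = ps l (l - d, c)"
        unfolding T ab by (simp add: algebra_simps)
      then show ?thesis using True by (intro exI[of _ "(l - d, c)"]) auto
    next
      case False
      then have "c = 0" by auto
      then have "cm_app T (1, 0) = ps l (1, 0)" unfolding T ab by simp
      then show ?thesis by (intro exI[of _ "(1, 0)"]) auto
    qed
  qed
qed

lemma quad_root: "\<exists>l::complex. l * l - m * l + 1 = 0"
proof -
  define s where "s = csqrt (m*m - 4)"
  have hs: "s * s = m*m - 4" unfolding s_def using power2_csqrt[of "m*m-4"] by (simp add: power2_eq_square)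
  define l where "l = (m + s) / 2"
  have "l * l - m * l + 1 = (s*s - (m*m - 4))/4" unfolding l_def by (simp add: field_simps)
  also have "\<dots> = 0" using hs by simp
  finally show ?thesis by blast
qed

lemma funpow_comm:
  assumes "\<And>v. f (g v) = g (f v)"
  shows "(f ^^ n) (g v) = g ((f ^^ n) v)"
  by (induction n) (simp_all add: assms)

lemma zpow_comm:
  assumes "in_disk_seq \<alpha>"
  shows "zapp (zmat_zpow (cmv \<alpha>) m) (zapp (cmv \<alpha>) v) = zapp (cmv \<alpha>) (zapp (zmat_zpow (cmv \<alpha>) m) v)"
proof (cases "0 \<le> m")
  case True
  then show ?thesis unfolding zapp_zpow by (simp add: funpow_swap1)
next
  case False
  have c: "\<And>v. zapp (zmat_adj (cmv \<alpha>)) (zapp (cmv \<alpha>) v) = zapp (cmv \<alpha>) (zapp (zmat_adj (cmv \<alpha>)) v)"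
    using cmv_unit1[OF assms] cmv_unit2[OF assms] by simp
  show ?thesis using False unfolding zapp_zpow by (simp add: funpow_comm[where f="zapp (zmat_adj (cmv \<alpha>))" and g="zapp (cmv \<alpha>)", OF c])
qed

lemma disc_apply_zapp:
  "zapp (disc_apply \<beta> p (cmv \<alpha>)) v i =
     (\<Sum>k\<le>p. coeff (disc_poly \<beta> p) k * zapp (zmat_zpow (cmv \<alpha>) (int k - int (p div 2))) v i)"
proof -
  have b: "\<And>k. k \<in> {..p} \<Longrightarrow> band (2 * int p) (zmat_zpow (cmv \<alpha>) (int k - int (p div 2)))"
    by (rule band_mono[OF band_zpow]) auto
  show ?thesis unfolding disc_apply_def by (rule zapp_matsum[OF _ b]) auto
qed

lemma disc_comm:
  assumes "in_disk_seq \<alpha>"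
  shows "zapp (disc_apply \<beta> p (cmv \<alpha>)) (zapp (cmv \<alpha>) v) = zapp (cmv \<alpha>) (zapp (disc_apply \<beta> p (cmv \<alpha>)) v)"
proof
  fix i
  let ?Z = "\<lambda>k. zmat_zpow (cmv \<alpha>) (int k - int (p div 2))"
  let ?c = "\<lambda>k. coeff (disc_poly \<beta> p) k"
  have "zapp (cmv \<alpha>) (zapp (disc_apply \<beta> p (cmv \<alpha>)) v) i
      = zapp (cmv \<alpha>) (\<lambda>j. \<Sum>k\<le>p. ?c k * zapp (?Z k) v j) i"
    unfolding disc_apply_zapp ..
  also have "\<dots> = (\<Sum>k\<le>p. zapp (cmv \<alpha>) (\<lambda>j. ?c k * zapp (?Z k) v j) i)"
    by (rule zapp_lin_sum[OF band_cmv]) auto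
  also have "\<dots> = (\<Sum>k\<le>p. ?c k * zapp (cmv \<alpha>) (zapp (?Z k) v) i)"
    using zapp_scale[OF band_cmv] by simp
  also have "\<dots> = (\<Sum>k\<le>p. ?c k * zapp (?Z k) (zapp (cmv \<alpha>) v) i)"
    using zpow_comm[OF assms] by simp
  also have "\<dots> = zapp (disc_apply \<beta> p (cmv \<alpha>)) (zapp (cmv \<alpha>) v) i"
    unfolding disc_apply_zapp ..
  finally show "zapp (disc_apply \<beta> p (cmv \<alpha>)) (zapp (cmv \<alpha>) v) i = zapp (cmv \<alpha>) (zapp (disc_apply \<beta> p (cmv \<alpha>)) v) i" by simp
qed

lemma shift_comm_entries:
  assumes "in_disk_seq \<alpha>" "p > 0" "disc_apply \<beta> p (cmv \<alpha>) = shiftsum p"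
  shows "cmv \<alpha> i (j + int p) + cmv \<alpha> i (j - int p) = cmv \<alpha> (i - int p) j + cmv \<alpha> (i + int p) j"
proof -
  let ?C = "cmv \<alpha>"
  have c: "zapp (shiftsum p) (zapp ?C (delta j)) i = zapp ?C (zapp (shiftsum p) (delta j)) i"
    using disc_comm[OF assms(1), of \<beta> p "delta j"] assms(3) by simp
  have "zapp (shiftsum p) (zapp ?C (delta j)) i = ?C (i - int p) j + ?C (i + int p) j"
    unfolding zapp_shiftsum[OF assms(2)] zapp_delta[OF band_cmv] ..
  moreover have "zapp (shiftsum p) (delta j) = (\<lambda>k. 1 * delta (j + int p) k + 1 * delta (j - int p) k)"
    using zapp_shiftsum[OF assms(2)] by (auto simp: delta_def)
  then have "zapp ?C (zapp (shiftsum p) (delta j)) i = ?C i (j + int p) + ?C i (j - int p)"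
    using zapp_lin2[OF band_cmv, of \<alpha> 1 "delta (j + int p)" 1 "delta (j - int p)" i] zapp_delta[OF band_cmv] by simp
  ultimately show ?thesis using c by simp
qed

lemma cmv_per:
  assumes "in_disk_seq \<alpha>" "even p" "p > 0" "disc_apply \<beta> p (cmv \<alpha>) = shiftsum p"
  shows "cmv \<alpha> (i + int p) (j + int p) = cmv \<alpha> i j"
proof -
  let ?C = "cmv \<alpha>"
  have p2: "2 \<le> int p" using assms(2,3) by presburger
  have z: "\<And>a b. 2 < \<bar>a - b\<bar> \<Longrightarrow> ?C a b = 0" using band_cmv unfolding band_def by auto
  show ?thesis
  proof (cases "2 < \<bar>i - j\<bar>")
    case True
    then show ?thesis using z[of i j] z[of "i + int p" "j + int p"] by simp
  next
    case False
    show ?thesis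
    proof (cases "j - i \<ge> -1")
      case True
      have e: "?C i (j + int p + int p) + ?C i (j + int p - int p) = ?C (i - int p) (j + int p) + ?C (i + int p) (j + int p)"
        by (rule shift_comm_entries[OF assms(1,3,4)])
      have "?C i (j + int p + int p) = 0" by (rule z) (use True p2 in auto)
      moreover have "?C (i - int p) (j + int p) = 0" by (rule z) (use True p2 in auto)
      ultimately show ?thesis using e by simp
    next
      case False
      have e: "?C (i + int p) (j + int p) + ?C (i + int p) (j - int p) = ?C (i + int p - int p) j + ?C (i + int p + int p) j"
        by (rule shift_comm_entries[OF assms(1,3,4)])
      have "?C (i + int p) (j - int p) = 0" by (rule z) (use False p2 in auto)
      moreover have "?C (i + int p + int p) j = 0" by (rule z) (use False p2 in auto)
      ultimately show ?thesis using e by simp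
    qed
  qed
qed

lemma cmv_entries:
  assumes "even n"
  shows "cmv \<alpha> n (n-1) = cnj (\<alpha> n) * rho (\<alpha> (n-1))"
    and "cmv \<alpha> (n+1) (n-1) = rho (\<alpha> n) * rho (\<alpha> (n-1))"
    and "cmv \<alpha> (n+1) n = - rho (\<alpha> n) * \<alpha> (n-1)"
proof -
  have p1: "(n - 0) mod 2 = 0" "(n + 1 - 0) mod 2 \<noteq> 0" "(n - 1) mod 2 \<noteq> 0" "(n + 1 - 1) mod 2 = 0"
    using assms by presburger+
  have L0: "\<And>x. zapp (cmvL \<alpha>) x n = cnj (\<alpha> n) * x n + rho (\<alpha> n) * x (n+1)"
    unfolding cmvL_def using zapp_theta_ev[OF p1(1)] by simp
  have L1: "\<And>x. zapp (cmvL \<alpha>) x (n+1) = rho (\<alpha> n) * x n - \<alpha> n * x (n+1)"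
    unfolding cmvL_def using zapp_theta_od[OF p1(2)] by simp
  have M0: "\<And>y. zapp (cmvM \<alpha>) y n = rho (\<alpha> (n-1)) * y (n-1) - \<alpha> (n-1) * y n"
    unfolding cmvM_def using zapp_theta_od[OF p1(3)] by simp
  have M1: "\<And>y. zapp (cmvM \<alpha>) y (n+1) = cnj (\<alpha> (n+1)) * y (n+1) + rho (\<alpha> (n+1)) * y (n+1+1)"
    unfolding cmvM_def using zapp_theta_ev[OF p1(4)] by simp
  have E: "\<And>i j. cmv \<alpha> i j = zapp (cmvL \<alpha>) (zapp (cmvM \<alpha>) (delta j)) i"
    using zapp_delta[OF band_cmv] zapp_cmv by metis
  show "cmv \<alpha> n (n-1) = cnj (\<alpha> n) * rho (\<alpha> (n-1))"
    unfolding E L0 M0 M1 by (simp add: delta_def)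
  show "cmv \<alpha> (n+1) (n-1) = rho (\<alpha> n) * rho (\<alpha> (n-1))"
    unfolding E L1 M0 M1 by (simp add: delta_def)
  show "cmv \<alpha> (n+1) n = - rho (\<alpha> n) * \<alpha> (n-1)"
    unfolding E L1 M0 M1 by (simp add: delta_def)
qed

definition rr :: "complex \<Rightarrow> real" where "rr a = sqrt (1 - (cmod a)\<^sup>2)"

lemma rho_rr: "rho a = complex_of_real (rr a)" unfolding rho_def rr_def ..

lemma rr_nonneg: "cmod a < 1 \<Longrightarrow> 0 \<le> rr a"
proof -
  assume "cmod a < 1"
  then have "(cmod a)\<^sup>2 < 1" by (simp add: abs_square_less_1)
  then show ?thesis unfolding rr_def by simp
qed

lemma rr_sq: "cmod a < 1 \<Longrightarrow> (rr a)\<^sup>2 = 1 - (cmod a)\<^sup>2"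
proof -
  assume "cmod a < 1"
  then have "(cmod a)\<^sup>2 < 1" by (simp add: abs_square_less_1)
  then show ?thesis unfolding rr_def by simp
qed

lemma norm_rho: "cmod a < 1 \<Longrightarrow> cmod (rho a) = rr a"
  unfolding rho_rr using rr_nonneg by simp

lemma norm_id1:
  assumes "in_disk_seq \<alpha>" "even n"
  shows "(cmod (cmv \<alpha> n (n-1)))\<^sup>2 + (cmod (cmv \<alpha> (n+1) (n-1)))\<^sup>2 = (rr (\<alpha> (n-1)))\<^sup>2"
proof -
  have d: "\<And>k. cmod (\<alpha> k) < 1" using assms(1) unfolding in_disk_seq_def by auto
  have "(cmod (cmv \<alpha> n (n-1)))\<^sup>2 + (cmod (cmv \<alpha> (n+1) (n-1)))\<^sup>2
      = (rr (\<alpha> (n-1)))\<^sup>2 * ((cmod (\<alpha> n))\<^sup>2 + (rr (\<alpha> n))\<^sup>2)"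
    unfolding cmv_entries[OF assms(2)] norm_mult complex_mod_cnj norm_rho[OF d]
    by (simp add: power_mult_distrib algebra_simps)
  also have "\<dots> = (rr (\<alpha> (n-1)))\<^sup>2" using rr_sq[OF d[of n]] by simp
  finally show ?thesis .
qed

lemma norm_id2:
  assumes "in_disk_seq \<alpha>" "even n"
  shows "(cmod (cmv \<alpha> (n+1) n))\<^sup>2 + (cmod (cmv \<alpha> (n+1) (n-1)))\<^sup>2 = (rr (\<alpha> n))\<^sup>2"
proof -
  have d: "\<And>k. cmod (\<alpha> k) < 1" using assms(1) unfolding in_disk_seq_def by auto
  have "(cmod (cmv \<alpha> (n+1) n))\<^sup>2 + (cmod (cmv \<alpha> (n+1) (n-1)))\<^sup>2
      = (rr (\<alpha> n))\<^sup>2 * ((cmod (\<alpha> (n-1)))\<^sup>2 + (rr (\<alpha> (n-1)))\<^sup>2)"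
    unfolding cmv_entries[OF assms(2)] norm_mult norm_minus_cancel norm_rho[OF d]
    by (simp add: power_mult_distrib algebra_simps)
  also have "\<dots> = (rr (\<alpha> n))\<^sup>2" using rr_sq[OF d[of "n-1"]] by simp
  finally show ?thesis .
qed

lemma alpha_per:
  assumes "in_disk_seq \<alpha>" "even p" "p > 0"
    and cp: "\<And>i j. cmv \<alpha> (i + int p) (j + int p) = cmv \<alpha> i j"
  shows "periodic_seq \<alpha> p"
proof -
  let ?P = "int p"
  have d: "\<And>k. cmod (\<alpha> k) < 1" using assms(1) unfolding in_disk_seq_def by auto
  have ep: "even ?P" using assms(2) by simp
  have c1: "\<And>n. cmv \<alpha> (n + ?P) (n + ?P - 1) = cmv \<alpha> n (n-1)"
    using cp by (metis add.commute add_diff_eq)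
  have c2: "\<And>n. cmv \<alpha> (n + ?P + 1) (n + ?P - 1) = cmv \<alpha> (n+1) (n-1)"
    using cp by (metis add.commute add.left_commute add_diff_eq)
  have c3: "\<And>n. cmv \<alpha> (n + ?P + 1) (n + ?P) = cmv \<alpha> (n+1) n"
    using cp by (metis add.commute add.left_commute)
  have rrp: "rr (\<alpha> (m + ?P)) = rr (\<alpha> m)" for m
  proof -
    have "(rr (\<alpha> (m + ?P)))\<^sup>2 = (rr (\<alpha> m))\<^sup>2"
    proof (cases "even m")
      case True
      then have e2: "even (m + ?P)" using ep by simp
      show ?thesis using norm_id2[OF assms(1) True] norm_id2[OF assms(1) e2] c2[of m] c3[of m] by simp
    next
      case False
      then have e1: "even (m + 1)" "even (m + 1 + ?P)" using ep by simp_all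
      have "(rr (\<alpha> (m + ?P)))\<^sup>2 = (rr (\<alpha> (m + 1 + ?P - 1)))\<^sup>2" by (simp add: algebra_simps)
      also have "\<dots> = (rr (\<alpha> (m + 1 - 1)))\<^sup>2"
        using norm_id1[OF assms(1) e1(1)] norm_id1[OF assms(1) e1(2)] c1[of "m+1"] c2[of "m+1"] by simp
      finally show ?thesis by simp
    qed
    then show ?thesis using rr_nonneg[OF d] by (simp add: power2_eq_iff_nonneg)
  qed
  then have rhop: "\<And>m. rho (\<alpha> (m + ?P)) = rho (\<alpha> m)" unfolding rho_rr by simp
  have nz: "\<And>k. rho (\<alpha> k) \<noteq> 0" using rho_nz d by auto
  show ?thesis unfolding periodic_seq_def
  proof
    fix m
    show "\<alpha> (m + ?P) = \<alpha> m"
    proof (cases "even m")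
      case True
      then have e2: "even (m + ?P)" using ep by simp
      have "cnj (\<alpha> (m + ?P)) * rho (\<alpha> (m + ?P - 1)) = cnj (\<alpha> m) * rho (\<alpha> (m - 1))"
        using cmv_entries(1)[OF True] cmv_entries(1)[OF e2] c1[of m] by simp
      moreover have "rho (\<alpha> (m + ?P - 1)) = rho (\<alpha> (m - 1))" using rhop[of "m-1"] by (simp add: algebra_simps)
      ultimately have "cnj (\<alpha> (m + ?P)) = cnj (\<alpha> m)" using nz[of "m-1"] by simp
      then show ?thesis by simp
    next
      case False
      then have e1: "even (m + 1)" "even (m + 1 + ?P)" using ep by simp_all
      have "- rho (\<alpha> (m + 1 + ?P)) * \<alpha> (m + 1 + ?P - 1) = - rho (\<alpha> (m+1)) * \<alpha> (m + 1 - 1)"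
        using cmv_entries(3)[OF e1(1)] cmv_entries(3)[OF e1(2)] c3[of "m+1"] by (simp add: algebra_simps)
      moreover have "rho (\<alpha> (m + 1 + ?P)) = rho (\<alpha> (m+1))" using rhop[of "m+1"] by (simp add: algebra_simps)
      ultimately have "\<alpha> (m + 1 + ?P - 1) = \<alpha> (m + 1 - 1)" using nz[of "m+1"] by simp
      then show ?thesis by (simp add: algebra_simps)
    qed
  qed
qed

definition rprod :: "(int \<Rightarrow> complex) \<Rightarrow> nat \<Rightarrow> complex" where
  "rprod \<alpha> n = (\<Prod>k<n. inverse (rho (\<alpha> (int k))))"

lemma transfer_eq: "transfer \<alpha> n = (let r = inverse (rho (\<alpha> n)) in
     (Polynomial.smult r [:0, 1:], Polynomial.smult r [: - cnj (\<alpha> n) :], Polynomial.smult r [:0, - \<alpha> n:], Polynomial.smult r [:1:]))"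
  unfolding transfer_def ..

lemma tp_inv:
  "transfer_prod \<alpha> n = (a,b,c,d) \<Longrightarrow>
     degree a \<le> n \<and> degree b \<le> n \<and> degree c \<le> n \<and> degree d \<le> n \<and>
     coeff b n = 0 \<and> coeff a n = rprod \<alpha> n \<and> poly c 0 = 0 \<and> poly d 0 = rprod \<alpha> n"
proof (induction n arbitrary: a b c d)
  case 0 then show ?case by (simp add: pm2_id_def rprod_def)
next
  case (Suc n)
  obtain a0 b0 c0 d0 where P: "transfer_prod \<alpha> n = (a0,b0,c0,d0)" by (cases "transfer_prod \<alpha> n") auto
  note IH = Suc.IH[OF P]
  define r where "r = inverse (rho (\<alpha> (int n)))"
  define x where "x = cnj (\<alpha> (int n))"
  define y where "y = \<alpha> (int n)"
  have E: "a = Polynomial.smult r (pCons 0 a0) + Polynomial.smult (- r * x) c0"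
          "b = Polynomial.smult r (pCons 0 b0) + Polynomial.smult (- r * x) d0"
          "c = Polynomial.smult (- r * y) (pCons 0 a0) + Polynomial.smult r c0"
          "d = Polynomial.smult (- r * y) (pCons 0 b0) + Polynomial.smult r d0"
    using Suc.prems P unfolding transfer_prod.simps transfer_eq Let_def pm2_mult_def r_def x_def y_def
    by (auto simp: algebra_simps smult_add_right)
  have dg: "degree (Polynomial.smult s (pCons 0 q) + Polynomial.smult t w) \<le> Suc n" if "degree q \<le> n" "degree w \<le> n" for s t q w
  proof -
    have "degree (Polynomial.smult s (pCons 0 q)) \<le> Suc n" using that(1)
      by (metis degree_pCons_le degree_smult_le le_trans not_less_eq_eq)
    moreover have "degree (Polynomial.smult t w) \<le> Suc n" using that(2) degree_smult_le le_Suc_eq order_trans by blast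
    ultimately show ?thesis using degree_add_le by blast
  qed
  have cf: "coeff (Polynomial.smult s (pCons 0 q) + Polynomial.smult t w) (Suc n) = s * coeff q n" if "degree w \<le> n" for s t q w
    using that by (simp add: coeff_eq_0)
  have rp: "rprod \<alpha> (Suc n) = rprod \<alpha> n * r" unfolding rprod_def r_def by simp
  have 1: "degree a \<le> Suc n" unfolding E(1) by (rule dg) (use IH in auto)
  have 2: "degree b \<le> Suc n" unfolding E(2) by (rule dg) (use IH in auto)
  have 3: "degree c \<le> Suc n" unfolding E(3) by (rule dg) (use IH in auto)
  have 4: "degree d \<le> Suc n" unfolding E(4) by (rule dg) (use IH in auto)
  have 5: "coeff b (Suc n) = 0" unfolding E(2) by (subst cf) (use IH in auto)
  have 6: "coeff a (Suc n) = rprod \<alpha> (Suc n)" unfolding E(1) rp by (subst cf) (use IH in auto)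
  have 7: "poly c 0 = 0" unfolding E(3) using IH by simp
  have 8: "poly d 0 = rprod \<alpha> (Suc n)" unfolding E(4) rp using IH by simp
  show ?case using 1 2 3 4 5 6 7 8 by blast
qed

lemma tp_inv2:
  "transfer_prod \<alpha> (Suc n) = (a,b,c,d) \<Longrightarrow> coeff d (Suc n) = 0 \<and> poly a 0 = 0"
proof -
  assume h: "transfer_prod \<alpha> (Suc n) = (a,b,c,d)"
  obtain a0 b0 c0 d0 where P: "transfer_prod \<alpha> n = (a0,b0,c0,d0)" by (cases "transfer_prod \<alpha> n") auto
  note IH = tp_inv[OF P]
  define r where "r = inverse (rho (\<alpha> (int n)))"
  define x where "x = cnj (\<alpha> (int n))"
  define y where "y = \<alpha> (int n)"
  have E: "a = Polynomial.smult r (pCons 0 a0) + Polynomial.smult (- r * x) c0"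
          "d = Polynomial.smult (- r * y) (pCons 0 b0) + Polynomial.smult r d0"
    using h P unfolding transfer_prod.simps transfer_eq Let_def pm2_mult_def r_def x_def y_def
    by (auto simp: algebra_simps smult_add_right)
  show ?thesis unfolding E using IH by (simp add: coeff_eq_0)
qed

lemma rprod_nz: "in_disk_seq \<alpha> \<Longrightarrow> rprod \<alpha> n \<noteq> 0"
  unfolding rprod_def using rho_nz unfolding in_disk_seq_def by auto

lemma disc_props:
  assumes "p > 0"
  shows "degree (disc_poly \<alpha> p) \<le> p" "coeff (disc_poly \<alpha> p) p = rprod \<alpha> p"
    "poly (disc_poly \<alpha> p) 0 = rprod \<alpha> p"
proof -
  obtain a b c d where P: "transfer_prod \<alpha> p = (a,b,c,d)" by (cases "transfer_prod \<alpha> p") auto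
  obtain m where m: "p = Suc m" using assms by (cases p) auto
  note I1 = tp_inv[OF P] and I2 = tp_inv2[OF P[unfolded m]]
  have T: "disc_poly \<alpha> p = a + d" unfolding disc_poly_def P pm2_trace_def by simp
  show "degree (disc_poly \<alpha> p) \<le> p" unfolding T using I1 degree_add_le by blast
  show "coeff (disc_poly \<alpha> p) p = rprod \<alpha> p" unfolding T using I1 I2 m by simp
  show "poly (disc_poly \<alpha> p) 0 = rprod \<alpha> p" unfolding T using I1 I2 by simp
qed

definition qmu :: "complex poly \<Rightarrow> nat \<Rightarrow> complex \<Rightarrow> complex poly" where
  "qmu T h m = T - Polynomial.smult m (monom 1 h)"

context
  fixes \<beta> :: "int \<Rightarrow> complex" and p :: nat
  assumes disk: "in_disk_seq \<beta>" and ev: "even p" and p0: "p > 0"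
begin

private abbreviation "T \<equiv> disc_poly \<beta> p"
private abbreviation "h \<equiv> p div 2"

lemma h_bounds: "1 \<le> h" "h < p"
  using ev p0 by presburger+

lemma q_coeff: "coeff (qmu T h m) p = rprod \<beta> p"
  unfolding qmu_def using disc_props(2)[OF p0, of \<beta>] h_bounds by (simp add: coeff_monom)

lemma q_degree: "degree (qmu T h m) = p"
proof (rule antisym)
  have "degree (Polynomial.smult m (monom (1::complex) h)) \<le> p"
    using h_bounds by (simp add: degree_monom_eq)
  then show "degree (qmu T h m) \<le> p" unfolding qmu_def
    using disc_props(1)[OF p0, of \<beta>] degree_diff_le by blast
  show "p \<le> degree (qmu T h m)" using q_coeff rprod_nz[OF disk] by (intro le_degree) simp
qed

lemma q_nz: "qmu T h m \<noteq> 0"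
proof
  assume "qmu T h m = 0"
  then have "coeff (qmu T h m) p = 0" by simp
  then show False using q_coeff rprod_nz[OF disk] by simp
qed

lemma q_at0: "poly (qmu T h m) 0 = rprod \<beta> p"
  unfolding qmu_def using disc_props(3)[OF p0, of \<beta>] h_bounds by (simp add: poly_monom)

lemma q_root:
  assumes "poly (qmu T h m) z = 0"
  shows "z \<noteq> 0" "discriminant \<beta> p z = m"
proof -
  show z: "z \<noteq> 0" using assms q_at0 rprod_nz[OF disk] by auto
  have "poly T z = m * z ^ h" using assms unfolding qmu_def by (simp add: poly_monom)
  then show "discriminant \<beta> p z = m" unfolding discriminant_def using z
    by (simp add: power_int_minus field_simps)
qed

lemma q_card:
  assumes "rsquarefree (qmu T h m)"
  shows "card {z. poly (qmu T h m) z = 0} = p"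
proof -
  let ?q = "qmu T h m"
  let ?R = "{z. poly ?q z = 0}"
  have fin: "finite ?R" using poly_roots_finite[OF q_nz] .
  have lc: "lead_coeff ?q \<noteq> 0" using q_nz by simp
  have "p = degree ?q" using q_degree by simp
  also have "\<dots> = degree (Polynomial.smult (lead_coeff ?q) (\<Prod>z\<in>?R. [:- z, 1:]))"
    using complex_poly_decompose_rsquarefree[OF assms] by simp
  also have "\<dots> = degree (\<Prod>z\<in>?R. [:- z, 1:])" using lc by simp
  also have "\<dots> = (\<Sum>z\<in>?R. degree [:- z, 1:])" by (rule degree_prod_sum_eq) simp
  also have "\<dots> = card ?R" by simp
  finally show ?thesis by simp
qed

lemma bad_finite: "finite {m. \<not> rsquarefree (qmu T h m)}"
proof -
  define R where "R = [:0, 1:] * pderiv T - Polynomial.smult (of_nat h) T"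
  have R0: "poly R 0 = - of_nat h * rprod \<beta> p" unfolding R_def using disc_props(3)[OF p0, of \<beta>] by simp
  have Rnz: "R \<noteq> 0" using R0 h_bounds rprod_nz[OF disk] by force
  have "{m. \<not> rsquarefree (qmu T h m)} \<subseteq> (\<lambda>x. poly T x / x ^ h) ` {x. poly R x = 0}"
  proof
    fix m assume "m \<in> {m. \<not> rsquarefree (qmu T h m)}"
    then obtain x where x: "poly (qmu T h m) x = 0" "poly (pderiv (qmu T h m)) x = 0"
      unfolding rsquarefree_roots by auto
    have x0: "x \<noteq> 0" using q_root(1)[OF x(1)] .
    have e1: "poly T x = m * x ^ h" using x(1) unfolding qmu_def by (simp add: poly_monom)
    have e2: "poly (pderiv T) x = m * (of_nat h * x ^ (h - 1))"
      using x(2) unfolding qmu_def by (simp add: pderiv_diff pderiv_smult pderiv_monom poly_monom)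
    have xh: "x * x ^ (h - 1) = x ^ h" using h_bounds by (simp add: power_eq_if)
    have "poly R x = x * (m * (of_nat h * x ^ (h - 1))) - of_nat h * (m * x ^ h)"
      unfolding R_def using e1 e2 by simp
    also have "\<dots> = 0" using xh by (simp add: algebra_simps)
    finally have "x \<in> {x. poly R x = 0}" by simp
    moreover have "m = poly T x / x ^ h" using e1 x0 by simp
    ultimately show "m \<in> (\<lambda>x. poly T x / x ^ h) ` {x. poly R x = 0}" by blast
  qed
  moreover have "finite ((\<lambda>x. poly T x / x ^ h) ` {x. poly R x = 0})"
    using poly_roots_finite[OF Rnz] by simp
  ultimately show ?thesis by (rule finite_subset)
qed

end

lemma good_infinite:
  assumes "finite (B :: complex set)"
  shows "infinite {l. l \<noteq> 0 \<and> l + inverse l \<notin> B}"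
proof -
  have "{l. \<not> (l \<noteq> 0 \<and> l + inverse l \<notin> B)} \<subseteq> {0} \<union> (\<Union>m\<in>B. {l. poly [:1, -m, 1:] l = 0})"
  proof
    fix l assume "l \<in> {l. \<not> (l \<noteq> 0 \<and> l + inverse l \<notin> B)}"
    then have h: "l = 0 \<or> l + inverse l \<in> B" by auto
    show "l \<in> {0} \<union> (\<Union>m\<in>B. {l. poly [:1, -m, 1:] l = 0})"
    proof (cases "l = 0")
      case False
      then have "l + inverse l \<in> B" using h by auto
      moreover have "poly [:1, -(l + inverse l), 1:] l = 0" using False by (simp add: field_simps)
      ultimately show ?thesis by blast
    qed simp
  qed
  moreover have "finite ({0} \<union> (\<Union>m\<in>B. {l. poly [:1, -m, 1:] l = 0}))"
  proof -
    have "\<And>m::complex. finite {l. poly [:1, -m, 1:] l = 0}" by (rule poly_roots_finite) simp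
    then show ?thesis using assms by simp
  qed
  ultimately have "finite {l. \<not> (l \<noteq> 0 \<and> l + inverse l \<notin> B)}" by (rule finite_subset)
  moreover have "UNIV = {l. l \<noteq> 0 \<and> l + inverse l \<notin> B} \<union> {l. \<not> (l \<noteq> 0 \<and> l + inverse l \<notin> B)}" by auto
  ultimately show ?thesis
  proof -
    assume f1: "finite {l. \<not> (l \<noteq> 0 \<and> l + inverse l \<notin> B)}"
      and U: "UNIV = {l. l \<noteq> 0 \<and> l + inverse l \<notin> B} \<union> {l. \<not> (l \<noteq> 0 \<and> l + inverse l \<notin> B)}"
    show ?thesis
    proof
      assume "finite {l. l \<noteq> 0 \<and> l + inverse l \<notin> B}"
      then have "finite (UNIV :: complex set)" using f1 by (subst U) (rule finite_UnI)
      then show False using infinite_UNIV_char_0 by blast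
    qed
  qed
qed

lemma eig_indep:
  fixes m :: nat and u :: "nat \<Rightarrow> int \<Rightarrow> complex" and z c :: "nat \<Rightarrow> complex"
  assumes bA: "band r A"
    and eig: "\<And>k. k < m \<Longrightarrow> zapp A (u k) = (\<lambda>n. z k * u k n)"
    and nz: "\<And>k. k < m \<Longrightarrow> \<exists>n. u k n \<noteq> 0"
    and inj: "inj_on z {..<m}"
    and sm: "\<And>n. (\<Sum>k<m. c k * u k n) = 0"
  shows "\<forall>k<m. c k = 0"
  using eig nz inj sm
proof (induction m arbitrary: c)
  case 0 then show ?case by simp
next
  case (Suc m)
  have Az: "zapp A (\<lambda>n. \<Sum>k<Suc m. c k * u k n) i = (\<Sum>k<Suc m. c k * z k * u k i)" for i
  proof -
    have "zapp A (\<lambda>n. \<Sum>k<Suc m. c k * u k n) i = (\<Sum>k<Suc m. zapp A (\<lambda>n. c k * u k n) i)"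
      by (rule zapp_lin_sum[OF bA]) simp
    also have "\<dots> = (\<Sum>k<Suc m. c k * zapp A (u k) i)" using zapp_scale[OF bA] by simp
    also have "\<dots> = (\<Sum>k<Suc m. c k * z k * u k i)" using Suc.prems(1) by (simp add: mult.assoc)
    finally show ?thesis .
  qed
  have s0: "(\<Sum>k<Suc m. c k * z k * u k i) = 0" for i
  proof -
    have "(\<lambda>n. \<Sum>k<Suc m. c k * u k n) = (\<lambda>n. 0)" using Suc.prems(4) by simp
    then show ?thesis using Az[of i] zapp_zero[of A] by metis
  qed
  have s1: "(\<Sum>k<m. (c k * (z k - z m)) * u k n) = 0" for n
  proof -
    have "(\<Sum>k<m. (c k * (z k - z m)) * u k n) = (\<Sum>k<Suc m. c k * z k * u k n) - z m * (\<Sum>k<Suc m. c k * u k n)"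
      by (simp add: sum_distrib_left algebra_simps sum_subtractf)
    then show ?thesis using s0 Suc.prems(4) by simp
  qed
  have inj': "inj_on z {..<m}" using Suc.prems(3) by (rule inj_on_subset) auto
  have c1: "\<forall>k<m. c k * (z k - z m) = 0"
    by (rule Suc.IH[OF _ _ inj' s1]) (use Suc.prems in auto)
  have cm: "\<forall>k<m. c k = 0"
  proof (intro allI impI)
    fix k assume k: "k < m"
    have "z k \<noteq> z m" using Suc.prems(3) k by (auto dest: inj_onD)
    then show "c k = 0" using c1 k by auto
  qed
  have "\<forall>n. c m * u m n = 0" using Suc.prems(4) cm by simp
  moreover obtain n where "u m n \<noteq> 0" using Suc.prems(2) by blast
  ultimately have "c m = 0" by force
  then show ?case using cm less_Suc_eq by auto
qed

lemma orth_zero: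
  fixes U :: "nat \<Rightarrow> nat \<Rightarrow> complex"
  assumes indep: "\<And>c. (\<And>s. s < p \<Longrightarrow> (\<Sum>k<p. c k * U k s) = 0) \<Longrightarrow> \<forall>k<p. c k = 0"
    and orth: "\<And>k. k < p \<Longrightarrow> (\<Sum>s<p. U k s * b s) = 0"
  shows "\<forall>s<p. b s = 0"
proof -
  define M where "M = mat p p (\<lambda>(k,s). U k s)"
  have M: "M \<in> carrier_mat p p" unfolding M_def by simp
  have MT: "transpose_mat M \<in> carrier_mat p p" using M by simp
  have "det (transpose_mat M) \<noteq> 0"
  proof
    assume "det (transpose_mat M) = 0"
    then obtain v where v: "v \<in> carrier_vec p" "v \<noteq> 0\<^sub>v p" "transpose_mat M *\<^sub>v v = 0\<^sub>v p"
      using det_0_iff_vec_prod_zero[OF MT] by blast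
    have "\<And>s. s < p \<Longrightarrow> (\<Sum>k<p. v $ k * U k s) = 0"
    proof -
      fix s assume s: "s < p"
      have "(transpose_mat M *\<^sub>v v) $ s = 0" using v(3) s by simp
      moreover have "(transpose_mat M *\<^sub>v v) $ s = (\<Sum>k<p. v $ k * U k s)"
        using s v(1) M unfolding M_def
        by (simp add: scalar_prod_def lessThan_atLeast0 mult.commute)
      ultimately show "(\<Sum>k<p. v $ k * U k s) = 0" by simp
    qed
    then have "\<forall>k<p. v $ k = 0" by (rule indep)
    then have "v = 0\<^sub>v p" using v(1) by (intro eq_vecI) auto
    then show False using v(2) by simp
  qed
  then have dM: "det M \<noteq> 0" using det_transpose[OF M] by simp
  define bv where "bv = vec p b"
  have "M *\<^sub>v bv = 0\<^sub>v p"
  proof (intro eq_vecI)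
    show "dim_vec (M *\<^sub>v bv) = dim_vec (0\<^sub>v p)" using M by simp
    fix k assume "k < dim_vec (0\<^sub>v p)"
    then have k: "k < p" by simp
    have "(M *\<^sub>v bv) $ k = (\<Sum>s<p. U k s * b s)"
      using k unfolding M_def bv_def by (simp add: scalar_prod_def lessThan_atLeast0)
    then show "(M *\<^sub>v bv) $ k = 0\<^sub>v p $ k" using orth[OF k] k by simp
  qed
  moreover have "bv \<in> carrier_vec p" unfolding bv_def by simp
  ultimately have "bv = 0\<^sub>v p" using det_0_iff_vec_prod_zero[OF M] dM by blast
  then show ?thesis unfolding bv_def by (metis index_vec index_zero_vec(1))
qed

lemma laurent_zero:
  fixes K :: "int set" and f :: "int \<Rightarrow> complex" and e :: "int \<Rightarrow> int"
  assumes fin: "finite K" and inj: "inj_on e K" and inf: "infinite G"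
    and G: "\<And>l. l \<in> G \<Longrightarrow> l \<noteq> 0 \<and> (\<Sum>j\<in>K. f j * l powi (e j)) = 0"
  shows "\<forall>j\<in>K. f j = 0"
proof -
  define N where "N = (\<Sum>j\<in>K. \<bar>e j\<bar>)"
  have eN: "\<And>j. j \<in> K \<Longrightarrow> 0 \<le> e j + N"
  proof -
    fix j assume j: "j \<in> K"
    have "\<bar>e j\<bar> \<le> N" unfolding N_def using member_le_sum[OF _ _ fin, of j "\<lambda>j. \<bar>e j\<bar>"] j by simp
    then show "0 \<le> e j + N" by simp
  qed
  have N0: "0 \<le> N" unfolding N_def by (simp add: sum_nonneg)
  define Q where "Q = (\<Sum>j\<in>K. monom (f j) (nat (e j + N)))"
  have roots: "G \<subseteq> {x. poly Q x = 0}"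
  proof
    fix l assume l: "l \<in> G"
    have l0: "l \<noteq> 0" using G[OF l] by simp
    have "poly Q l = (\<Sum>j\<in>K. f j * l ^ nat (e j + N))" unfolding Q_def by (simp add: poly_sum poly_monom)
    also have "\<dots> = (\<Sum>j\<in>K. f j * (l powi (e j) * l powi N))"
    proof (intro sum.cong refl)
      fix j assume j: "j \<in> K"
      have "l ^ nat (e j + N) = l powi (e j + N)" using eN[OF j] by (simp add: power_int_def)
      also have "\<dots> = l powi (e j) * l powi N" using l0 by (simp add: power_int_add)
      finally show "f j * l ^ nat (e j + N) = f j * (l powi (e j) * l powi N)" by simp
    qed
    also have "\<dots> = (\<Sum>j\<in>K. f j * l powi (e j)) * l powi N"
      by (simp add: sum_distrib_right mult.assoc)
    also have "\<dots> = 0" using G[OF l] by simp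
    finally show "l \<in> {x. poly Q x = 0}" by simp
  qed
  have "Q = 0"
  proof (rule ccontr)
    assume "Q \<noteq> 0"
    then have "finite {x. poly Q x = 0}" by (rule poly_roots_finite)
    then show False using roots inf finite_subset by blast
  qed
  show ?thesis
  proof
    fix j0 assume j0: "j0 \<in> K"
    have "coeff Q (nat (e j0 + N)) = (\<Sum>j\<in>K. if nat (e j + N) = nat (e j0 + N) then f j else 0)"
      unfolding Q_def by (simp add: coeff_sum coeff_monom)
    also have "\<dots> = (\<Sum>j\<in>{j0}. if nat (e j + N) = nat (e j0 + N) then f j else 0)"
    proof (rule sum.mono_neutral_right)
      show "\<forall>j\<in>K - {j0}. (if nat (e j + N) = nat (e j0 + N) then f j else 0) = 0"
      proof
        fix j assume j: "j \<in> K - {j0}"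
        have "e j \<noteq> e j0" using inj j j0 by (auto dest: inj_onD)
        then have "nat (e j + N) \<noteq> nat (e j0 + N)" using eN[OF j0] eN[of j] j by auto
        then show "(if nat (e j + N) = nat (e j0 + N) then f j else 0) = 0" by simp
      qed
    qed (use fin j0 in auto)
    also have "\<dots> = f j0" by simp
    finally show "f j0 = 0" using \<open>Q = 0\<close> by simp
  qed
qed

lemma phi_floq:
  assumes "p > 0"
  shows "fst (Phi \<alpha> p z l v n) = l powi (n div int p) * fst (Phi \<alpha> p z l v (n mod int p))"
proof -
  have "(n mod int p) div int p = 0" "(n mod int p) mod int p = n mod int p" using assms by simp_all
  then show ?thesis unfolding Phi_def by (cases "cm_app (Tprod \<alpha> z (nat (n mod int p))) v") simp
qed

lemma band_disc: "band (2 * int p) (disc_apply \<beta> p (cmv \<alpha>))"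
  unfolding band_def disc_apply_def
proof (intro allI impI)
  fix i j assume h: "2 * int p < \<bar>i - j\<bar>"
  show "(\<Sum>k\<le>p. coeff (disc_poly \<beta> p) k * zmat_zpow (cmv \<alpha>) (int k - int (p div 2)) i j) = 0"
  proof (intro sum.neutral ballI)
    fix k assume "k \<in> {..p}"
    then have "band (2 * int p) (zmat_zpow (cmv \<alpha>) (int k - int (p div 2)))"
      by (intro band_mono[OF band_zpow]) auto
    then show "coeff (disc_poly \<beta> p) k * zmat_zpow (cmv \<alpha>) (int k - int (p div 2)) i j = 0"
      using h unfolding band_def by simp
  qed
qed

lemma zapp_matdiff:
  assumes "band R A" "band R B"
  shows "zapp (\<lambda>i j. A i j - B i j) v i = zapp A v i - zapp B v i"
proof -
  have b: "band R (\<lambda>i j. A i j - B i j)" using assms unfolding band_def by auto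
  have "zapp (\<lambda>i j. A i j - B i j) v i = (\<Sum>j\<in>{i-R..i+R}. A i j * v j - B i j * v j)"
    using zapp_win[OF b order_refl] by (simp add: algebra_simps)
  also have "\<dots> = zapp A v i - zapp B v i"
    using zapp_win[OF assms(1) order_refl] zapp_win[OF assms(2) order_refl] by (simp add: sum_subtractf)
  finally show ?thesis .
qed

lemma key_row:
  assumes disk: "in_disk_seq \<beta>" and per: "periodic_seq \<beta> p" and ev: "even p" and p0: "p > 0"
    and lG: "l \<noteq> 0" "rsquarefree (qmu (disc_poly \<beta> p) (p div 2) (l + inverse l))"
    and s: "s < p"
  shows "(\<Sum>j\<in>{j\<in>{i - 2 * int p..i + 2 * int p}. nat (j mod int p) = s}.
            (disc_apply \<beta> p (cmv \<beta>) i j - shiftsum p i j) * l powi (j div int p)) = 0"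
proof -
  let ?C = "cmv \<beta>"
  let ?q = "qmu (disc_poly \<beta> p) (p div 2) (l + inverse l)"
  let ?R = "2 * int p"
  let ?W = "{i - ?R..i + ?R}"
  define m where "m = l + inverse l"
  define D where "D = (\<lambda>i j. disc_apply \<beta> p ?C i j - shiftsum p i j)"
  have bs: "band ?R (shiftsum p)" by (rule band_mono[OF band_shiftsum[OF p0]]) simp
  have bD: "band ?R D" unfolding D_def using band_disc[of p \<beta> \<beta>] bs
    unfolding band_def by auto
  define Rt where "Rt = {z. poly ?q z = 0}"
  have Rtfin: "finite Rt" unfolding Rt_def by (rule poly_roots_finite[OF q_nz[OF disk ev p0]])
  obtain zs where zs: "distinct zs" "set zs = Rt" using finite_distinct_list[OF Rtfin] by blast
  have lzs: "length zs = p" using distinct_card[OF zs(1)] zs(2) q_card[OF disk ev p0 lG(2)] unfolding Rt_def by simp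
  have zroot: "poly ?q (zs ! k) = 0" if "k < p" for k using that zs(2) lzs nth_mem unfolding Rt_def by fastforce
  have z0: "zs ! k \<noteq> 0" if "k < p" for k using q_root(1)[OF disk ev p0 zroot[OF that]] .
  have zd: "discriminant \<beta> p (zs ! k) = m" if "k < p" for k using q_root(2)[OF disk ev p0 zroot[OF that]] unfolding m_def .
  have ex: "\<exists>v. v \<noteq> (0,0) \<and> cm_app (Tprod \<beta> (zs ! k) p) v = ps l v" if "k < p" for k
  proof (rule eigvec2)
    have tr: "cm_tr (Tprod \<beta> (zs ! k) p) = m" using Tprod_tr[OF z0[OF that] ev] zd[OF that] by simp
    have dt: "cm_det (Tprod \<beta> (zs ! k) p) = 1" using Tprod_det[OF disk z0[OF that]] ev by simp
    show "l * l - cm_tr (Tprod \<beta> (zs ! k) p) * l + cm_det (Tprod \<beta> (zs ! k) p) = 0"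
      unfolding tr dt m_def using lG(1) by (simp add: field_simps)
  qed
  define v where "v k = (SOME v. v \<noteq> (0,0) \<and> cm_app (Tprod \<beta> (zs ! k) p) v = ps l v)" for k
  have vk: "v k \<noteq> (0,0) \<and> cm_app (Tprod \<beta> (zs ! k) p) (v k) = ps l (v k)" if "k < p" for k
    unfolding v_def by (rule someI_ex[OF ex[OF that]])
  define u where "u k n = fst (Phi \<beta> p (zs ! k) l (v k) n)" for k n
  have eig: "zapp ?C (u k) = (\<lambda>n. zs ! k * u k n)" if "k < p" for k
  proof -
    have "sol \<beta> (zs ! k) (\<lambda>n. fst (Phi \<beta> p (zs ! k) l (v k) n)) (\<lambda>n. snd (Phi \<beta> p (zs ! k) l (v k) n))"
      by (rule floq_sol2[OF per ev p0 lG(1)]) (use vk[OF that] in simp)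
    from sol_eig[OF disk z0[OF that] this] show ?thesis unfolding u_def by simp
  qed
  have unz: "\<exists>n. u k n \<noteq> 0" if "k < p" for k
    unfolding u_def using floq_nz[OF disk ev p0 z0[OF that]] vk[OF that] by blast
  have fl: "u k n = l powi (n div int p) * u k (n mod int p)" for k n
    unfolding u_def by (rule phi_floq[OF p0])
  have shp: "u k (n + int p) = l * u k n" for k n
    unfolding u_def using floq_per[OF p0 lG(1)] by (cases "Phi \<beta> p (zs ! k) l (v k) n") simp
  have Dz: "(\<Sum>j\<in>?W. D i j * u k j) = 0" if k: "k < p" for k
  proof -
    have deg: "degree (disc_poly \<beta> p) \<le> p" using disc_props(1)[OF p0] .
    have a1: "zapp (disc_apply \<beta> p ?C) (u k) i = m * u k i"
      using disc_eig[OF disk z0[OF k] eig[OF k] deg] zd[OF k] by simp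
    have um: "u k (i - int p) = inverse l * u k i"
      using shp[of k "i - int p"] lG(1) by (simp add: field_simps)
    have a2: "zapp (shiftsum p) (u k) i = m * u k i"
      unfolding zapp_shiftsum[OF p0] um shp m_def by (simp add: algebra_simps)
    have "zapp D (u k) i = 0" unfolding D_def
      using zapp_matdiff[OF band_disc bs] a1 a2 by simp
    then show ?thesis using zapp_win[OF bD order_refl] by simp
  qed
  define bb where "bb s' = (\<Sum>j\<in>{j\<in>?W. nat (j mod int p) = s'}. D i j * l powi (j div int p))" for s'
  have grp: "(\<Sum>j\<in>?W. D i j * u k j) = (\<Sum>s'<p. u k (int s') * bb s')" for k
  proof -
    have "(\<Sum>j\<in>?W. D i j * u k j) = (\<Sum>s'\<in>{..<p}. \<Sum>j\<in>{j\<in>?W. nat (j mod int p) = s'}. D i j * u k j)"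
      by (rule sum.group[symmetric]) (use p0 in \<open>auto simp: nat_less_iff\<close>)
    also have "\<dots> = (\<Sum>s'<p. u k (int s') * bb s')"
      unfolding bb_def sum_distrib_left
    proof (intro sum.cong refl)
      fix s' j assume j: "j \<in> {j\<in>?W. nat (j mod int p) = s'}"
      then have "j mod int p = int s'" using p0 by auto
      then show "D i j * u k j = u k (int s') * (D i j * l powi (j div int p))"
        using fl[of k j] by simp
    qed
    finally show ?thesis .
  qed
  have indep: "\<forall>k<p. c k = 0" if c: "\<And>s'. s' < p \<Longrightarrow> (\<Sum>k<p. c k * u k (int s')) = 0" for c
  proof (rule eig_indep[OF band_cmv, where m=p and u=u and z="\<lambda>k. zs ! k"])
    show "\<And>k. k < p \<Longrightarrow> zapp ?C (u k) = (\<lambda>n. zs ! k * u k n)" by (rule eig)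
    show "\<And>k. k < p \<Longrightarrow> \<exists>n. u k n \<noteq> 0" by (rule unz)
    show "inj_on (\<lambda>k. zs ! k) {..<p}" using zs(1) lzs by (simp add: inj_on_nth)
    fix n
    have nm: "int (nat (n mod int p)) = n mod int p" using p0 by simp
    have flk: "\<And>k. u k n = l powi (n div int p) * u k (int (nat (n mod int p)))"
      unfolding nm by (rule fl)
    have "(\<Sum>k<p. c k * u k n) = l powi (n div int p) * (\<Sum>k<p. c k * u k (int (nat (n mod int p))))"
      by (simp only: flk sum_distrib_left) (simp add: algebra_simps)
    also have "\<dots> = 0" using c[of "nat (n mod int p)"] p0 by (simp add: nat_less_iff)
    finally show "(\<Sum>k<p. c k * u k n) = 0" .
  qed
  have "\<forall>s'<p. bb s' = 0"
    by (rule orth_zero[where U="\<lambda>k s'. u k (int s')"]) (use indep Dz grp in auto)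
  then show ?thesis using s unfolding bb_def D_def by simp
qed

lemma key:
  assumes disk: "in_disk_seq \<beta>" and per: "periodic_seq \<beta> p" and ev: "even p" and p0: "p > 0"
  shows "disc_apply \<beta> p (cmv \<beta>) = shiftsum p"
proof (intro ext)
  fix i j
  define B where "B = {m. \<not> rsquarefree (qmu (disc_poly \<beta> p) (p div 2) m)}"
  have Bfin: "finite B" unfolding B_def by (rule bad_finite[OF disk ev p0])
  define G where "G = {l. l \<noteq> 0 \<and> l + inverse l \<notin> B}"
  have Ginf: "infinite G" unfolding G_def by (rule good_infinite[OF Bfin])
  let ?R = "2 * int p"
  let ?W = "{i - ?R..i + ?R}"
  have bs: "band ?R (shiftsum p)" by (rule band_mono[OF band_shiftsum[OF p0]]) simp
  show "disc_apply \<beta> p (cmv \<beta>) i j = shiftsum p i j"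
  proof (cases "j \<in> ?W")
    case False
    then have "?R < \<bar>i - j\<bar>" by auto
    then show ?thesis using band_disc[of p \<beta> \<beta>] bs unfolding band_def by simp
  next
    case True
    define s where "s = nat (j mod int p)"
    define K where "K = {j\<in>?W. nat (j mod int p) = s}"
    have jK: "j \<in> K" unfolding K_def s_def using True by simp
    have inj: "inj_on (\<lambda>j. j div int p) K"
    proof (rule inj_onI)
      fix a b assume a: "a \<in> K" and b: "b \<in> K" and e: "a div int p = b div int p"
      have "nat (a mod int p) = nat (b mod int p)" using a b unfolding K_def by auto
      moreover have "0 \<le> a mod int p" "0 \<le> b mod int p" using p0 by auto
      ultimately have "a mod int p = b mod int p" by simp
      then show "a = b" using e by (metis div_mult_mod_eq)
    qed
    have sp: "s < p" unfolding s_def using p0 by (simp add: nat_less_iff)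
    have "\<forall>j\<in>K. disc_apply \<beta> p (cmv \<beta>) i j - shiftsum p i j = 0"
    proof (rule laurent_zero[OF _ inj Ginf])
      show "finite K" unfolding K_def by (rule finite_subset[of _ ?W]) auto
      fix l assume l: "l \<in> G"
      then have l0: "l \<noteq> 0" and rs: "rsquarefree (qmu (disc_poly \<beta> p) (p div 2) (l + inverse l))"
        unfolding G_def B_def by auto
      show "l \<noteq> 0 \<and> (\<Sum>j\<in>K. (disc_apply \<beta> p (cmv \<beta>) i j - shiftsum p i j) * l powi (j div int p)) = 0"
        using l0 key_row[OF disk per ev p0 l0 rs sp, of i] unfolding K_def by simp
    qed
    then show ?thesis using jK by simp
  qed
qed

theorem theorem4p1:
  fixes p :: nat and \<alpha>0 \<alpha> :: "int \<Rightarrow> complex"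
  assumes "even p" and "p > 0"
    and "in_disk_seq \<alpha>0" and "periodic_seq \<alpha>0 p"
    and "in_disk_seq \<alpha>"
  shows "disc_apply \<alpha>0 p (cmv \<alpha>) =
           (\<lambda>i j. zmat_zpow shiftR (int p) i j + zmat_zpow shiftR (- int p) i j)
         \<longleftrightarrow> cmv \<alpha> \<in> iso_torus \<alpha>0 p"
proof -
  note ev = assms(1) and p0 = assms(2) and disk = assms(5)
  have SS: "(\<lambda>i j. zmat_zpow shiftR (int p) i j + zmat_zpow shiftR (- int p) i j) = shiftsum p"
    unfolding shiftsum_def ..
  show ?thesis unfolding SS
  proof
    assume H: "disc_apply \<alpha>0 p (cmv \<alpha>) = shiftsum p"
    have per: "periodic_seq \<alpha> p"
      by (rule alpha_per[OF disk ev p0]) (rule cmv_per[OF disk ev p0 H])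
    have deq: "discriminant \<alpha> p z = discriminant \<alpha>0 p z" if z0: "z \<noteq> 0" for z
    proof -
      define m where "m = discriminant \<alpha> p z"
      obtain l where lq: "l * l - m * l + 1 = 0" using quad_root by blast
      have l0: "l \<noteq> 0" using lq by auto
      have ml: "m = l + inverse l" using lq l0 by (simp add: field_simps)
      have tr: "cm_tr (Tprod \<alpha> z p) = m" using Tprod_tr[OF z0 ev] unfolding m_def .
      have dt: "cm_det (Tprod \<alpha> z p) = 1" using Tprod_det[OF disk z0] ev by simp
      obtain v where v: "v \<noteq> (0,0)" "cm_app (Tprod \<alpha> z p) v = ps l v"
      proof -
        have "l * l - cm_tr (Tprod \<alpha> z p) * l + cm_det (Tprod \<alpha> z p) = 0" using lq tr dt by simp
        from eigvec2[OF this] show ?thesis using that by blast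
      qed
      define u where "u n = fst (Phi \<alpha> p z l v n)" for n
      have so: "sol \<alpha> z (\<lambda>n. fst (Phi \<alpha> p z l v n)) (\<lambda>n. snd (Phi \<alpha> p z l v n))"
        by (rule floq_sol2[OF per ev p0 l0 v(2)])
      have eig: "zapp (cmv \<alpha>) u = (\<lambda>n. z * u n)" using sol_eig[OF disk z0 so] unfolding u_def by simp
      obtain n0 where n0: "u n0 \<noteq> 0" using floq_nz[OF disk ev p0 z0 v(1)] unfolding u_def by blast
      have shp: "u (n + int p) = l * u n" for n
        unfolding u_def using floq_per[OF p0 l0] by (cases "Phi \<alpha> p z l v n") simp
      have um: "u (n0 - int p) = inverse l * u n0"
        using shp[of "n0 - int p"] l0 by (simp add: field_simps)
      have a1: "zapp (disc_apply \<alpha>0 p (cmv \<alpha>)) u n0 = discriminant \<alpha>0 p z * u n0"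
        using disc_eig[OF disk z0 eig disc_props(1)[OF p0]] by simp
      have a2: "zapp (shiftsum p) u n0 = (l + inverse l) * u n0"
        unfolding zapp_shiftsum[OF p0] um shp by (simp add: algebra_simps)
      have "discriminant \<alpha>0 p z * u n0 = m * u n0" using a1 a2 H ml by auto
      then show ?thesis using n0 unfolding m_def by simp
    qed
    show "cmv \<alpha> \<in> iso_torus \<alpha>0 p"
      unfolding iso_torus_def using disk per deq by auto
  next
    assume "cmv \<alpha> \<in> iso_torus \<alpha>0 p"
    then obtain \<beta> where b: "cmv \<alpha> = cmv \<beta>" "in_disk_seq \<beta>" "periodic_seq \<beta> p"
      "\<And>z. z \<noteq> 0 \<Longrightarrow> discriminant \<beta> p z = discriminant \<alpha>0 p z"
      unfolding iso_torus_def by blast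
    have peq: "poly (disc_poly \<alpha>0 p - disc_poly \<beta> p) z = 0" if z0: "z \<noteq> 0" for z
    proof -
      have "z powi (- int (p div 2)) \<noteq> 0" using z0 by simp
      then show ?thesis using b(4)[OF z0] z0 unfolding discriminant_def by auto
    qed
    have "disc_poly \<alpha>0 p - disc_poly \<beta> p = 0"
    proof (rule ccontr)
      assume "disc_poly \<alpha>0 p - disc_poly \<beta> p \<noteq> 0"
      then have "finite {z. poly (disc_poly \<alpha>0 p - disc_poly \<beta> p) z = 0}" by (rule poly_roots_finite)
      moreover have "UNIV - {0} \<subseteq> {z. poly (disc_poly \<alpha>0 p - disc_poly \<beta> p) z = 0}" using peq by auto
      ultimately have "finite (UNIV - {0::complex})" by (rule finite_subset[rotated])
      then show False using infinite_UNIV_char_0[where 'a=complex] by simp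
    qed
    then have dp: "disc_poly \<alpha>0 p = disc_poly \<beta> p" by simp
    have "disc_apply \<alpha>0 p (cmv \<alpha>) = disc_apply \<beta> p (cmv \<beta>)"
      unfolding disc_apply_def dp b(1) ..
    also have "\<dots> = shiftsum p" by (rule key[OF b(2,3) ev p0])
    finally show "disc_apply \<alpha>0 p (cmv \<alpha>) = shiftsum p" .
  qed
qed

end
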